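(* Let $\mathcal B_i$ be a set of bidders whose valuations are all gross substitute. Then for every price vector $r\ge0$, the demand $D_i(r)$ of an EF-mediator for $\mathcal B_i$ equals the demand $D_{\mathrm{OR}}(r)$ of the OR-player for $\mathcal B_i$. Moreover, for a set $S$ in this demand, the allocation computed in the virtual auction of the EF-mediator for $S$ and reserve prices $r$ is an optimal allocation for the OR-player for $S$, and vice versa (an optimal allocation of $S$ for the OR-player can be used by the EF-mediator as her virtual-auction allocation for $S$ and $r$, maximizing her revenue).
   Context: Let $\Omega$ be a finite set of items; price vectors are $p\in\mathbb{R}_{\ge0}^\Omega$, $p(S)=\sum_{j\in S}p_j$, comparisons item-wise. Each bidder $b$ has a monotone valuation $v_b:2^\Omega\to\mathbb{R}$, $v_b(\emptyset)=0$; $D_b(p)$ is the set of $S\subseteq\Omega$ maximizing $v_b(S)-p(S)$. A valuation is gross substitute if for all price vectors $p^{(2)}\ge p^{(1)}\ge 0$ and every $D^{(1)}\in D(p^{(1)})$ there is $D^{(2)}\in D(p^{(2)})$ containing every $j\in D^{(1)}$ with $p^{(1)}_j=p^{(2)}_j$. An allocation of $T\subseteq\Omega$ to bidders $\mathcal B_i$ is a family of pairwise disjoint subsets $\langle T_b\rangle_{b\in\mathcal B_i}$ of $T$; it is envy free on $T$ at $p$ if each $T_b$ maximizes $v_b(\cdot)-p(\cdot)$ over subsets of $T$. EF-mediator for $\mathcal B_i$ at prices $r\ge0$: for every $S\subseteq\Omega$ a virtual auction computes a minimal (no item-wise smaller vector has the property) price vector $p^S\ge r$ that is envy free on $S$ for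 $\mathcal B_i$, with an envy-free allocation $\langle S_b\rangle$ of $S$ at $p^S$ maximizing $\sum_b p^S(S_b)$ among such allocations; set $p^S_j=r_j$ for $j\notin S$. Revenue $R_{i,r}(S)=\sum_b p^S(S_b)-r(S)$ if $S_b\in D_b(p^S)$ for all $b\in\mathcal B_i$, else $-1$. Demand $D_i(r)$ = set of maximizers of $R_{i,r}$. OR-player for $\mathcal B_i$: valuation $v_{\mathrm{OR}}(S)=\max\sum_{b\in\mathcal B_i}v_b(S_b)$ over allocations $\langle S_b\rangle$ of $S$; an allocation attaining this maximum is an optimal allocation for $S$. Her demand $D_{\mathrm{OR}}(r)$ is the set of $S$ maximizing $v_{\mathrm{OR}}(S)-r(S)$. *)

theory Defs
  imports Complex_Main
begin

(* Price vectors are functions 'a => real (only values on Omega matter). Allocations are 'b => 'a set (only values on B matter). *)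

definition price :: "('a \<Rightarrow> real) \<Rightarrow> 'a set \<Rightarrow> real" where
  "price p S = (\<Sum>j\<in>S. p j)"

definition demand :: "'a set \<Rightarrow> ('a set \<Rightarrow> real) \<Rightarrow> ('a \<Rightarrow> real) \<Rightarrow> 'a set set" where
  "demand \<Omega> u p = {S. S \<subseteq> \<Omega> \<and> (\<forall>T. T \<subseteq> \<Omega> \<longrightarrow> u T - price p T \<le> u S - price p S)}"

definition monotone_valuation :: "'a set \<Rightarrow> ('a set \<Rightarrow> real) \<Rightarrow> bool" where
  "monotone_valuation \<Omega> u \<longleftrightarrow> u {} = 0 \<and> (\<forall>S T. S \<subseteq> T \<and> T \<subseteq> \<Omega> \<longrightarrow> u S \<le> u T)"

definition gross_substitute :: "'a set \<Rightarrow> ('a set \<Rightarrow> real) \<Rightarrow> bool" where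
  "gross_substitute \<Omega> u \<longleftrightarrow>
     (\<forall>p1 p2. (\<forall>j\<in>\<Omega>. 0 \<le> p1 j \<and> p1 j \<le> p2 j) \<longrightarrow>
        (\<forall>D1\<in>demand \<Omega> u p1. \<exists>D2\<in>demand \<Omega> u p2. {j\<in>D1. p1 j = p2 j} \<subseteq> D2))"

definition is_alloc :: "'b set \<Rightarrow> 'a set \<Rightarrow> ('b \<Rightarrow> 'a set) \<Rightarrow> bool" where
  "is_alloc B T A \<longleftrightarrow> (\<forall>b\<in>B. A b \<subseteq> T) \<and> (\<forall>b\<in>B. \<forall>b'\<in>B. b \<noteq> b' \<longrightarrow> A b \<inter> A b' = {})"

definition envy_free :: "('b \<Rightarrow> 'a set \<Rightarrow> real) \<Rightarrow> 'b set \<Rightarrow> 'a set \<Rightarrow> ('a \<Rightarrow> real) \<Rightarrow> ('b \<Rightarrow> 'a set) \<Rightarrow> bool" where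
  "envy_free v B T p A \<longleftrightarrow> is_alloc B T A \<and>
     (\<forall>b\<in>B. \<forall>U. U \<subseteq> T \<longrightarrow> v b U - price p U \<le> v b (A b) - price p (A b))"

definition ef_price :: "'a set \<Rightarrow> ('b \<Rightarrow> 'a set \<Rightarrow> real) \<Rightarrow> 'b set \<Rightarrow> 'a set \<Rightarrow> ('a \<Rightarrow> real) \<Rightarrow> ('a \<Rightarrow> real) \<Rightarrow> bool" where
  "ef_price \<Omega> v B T r p \<longleftrightarrow> (\<forall>j\<in>\<Omega>. r j \<le> p j) \<and> (\<exists>A. envy_free v B T p A)"

definition minimal_ef_price :: "'a set \<Rightarrow> ('b \<Rightarrow> 'a set \<Rightarrow> real) \<Rightarrow> 'b set \<Rightarrow> 'a set \<Rightarrow> ('a \<Rightarrow> real) \<Rightarrow> ('a \<Rightarrow> real) \<Rightarrow> bool" where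
  "minimal_ef_price \<Omega> v B T r p \<longleftrightarrow> ef_price \<Omega> v B T r p \<and>
     \<not> (\<exists>q. ef_price \<Omega> v B T r q \<and> (\<forall>j\<in>\<Omega>. q j \<le> p j) \<and> (\<exists>j\<in>\<Omega>. q j < p j)) \<and>
     (\<forall>j\<in>\<Omega> - T. p j = r j)"

definition va_alloc :: "('b \<Rightarrow> 'a set \<Rightarrow> real) \<Rightarrow> 'b set \<Rightarrow> 'a set \<Rightarrow> ('a \<Rightarrow> real) \<Rightarrow> ('b \<Rightarrow> 'a set) \<Rightarrow> bool" where
  "va_alloc v B T p A \<longleftrightarrow> envy_free v B T p A \<and>
     (\<forall>A'. envy_free v B T p A' \<longrightarrow> (\<Sum>b\<in>B. price p (A' b)) \<le> (\<Sum>b\<in>B. price p (A b)))"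

(* pS S and AS S are the price vector and allocation computed by the virtual auction for S *)
definition virtual_auction :: "'a set \<Rightarrow> ('b \<Rightarrow> 'a set \<Rightarrow> real) \<Rightarrow> 'b set \<Rightarrow> ('a \<Rightarrow> real) \<Rightarrow>
    ('a set \<Rightarrow> 'a \<Rightarrow> real) \<Rightarrow> ('a set \<Rightarrow> 'b \<Rightarrow> 'a set) \<Rightarrow> bool" where
  "virtual_auction \<Omega> v B r pS AS \<longleftrightarrow>
     (\<forall>S. S \<subseteq> \<Omega> \<longrightarrow> minimal_ef_price \<Omega> v B S r (pS S) \<and> va_alloc v B S (pS S) (AS S))"

definition mediator_revenue :: "'a set \<Rightarrow> ('b \<Rightarrow> 'a set \<Rightarrow> real) \<Rightarrow> 'b set \<Rightarrow> ('a \<Rightarrow> real) \<Rightarrow>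
    ('a \<Rightarrow> real) \<Rightarrow> ('b \<Rightarrow> 'a set) \<Rightarrow> 'a set \<Rightarrow> real" where
  "mediator_revenue \<Omega> v B r p A S =
     (if \<forall>b\<in>B. A b \<in> demand \<Omega> (v b) p
      then (\<Sum>b\<in>B. price p (A b)) - price r S else -1)"

definition mediator_demand :: "'a set \<Rightarrow> ('b \<Rightarrow> 'a set \<Rightarrow> real) \<Rightarrow> 'b set \<Rightarrow> ('a \<Rightarrow> real) \<Rightarrow>
    ('a set \<Rightarrow> 'a \<Rightarrow> real) \<Rightarrow> ('a set \<Rightarrow> 'b \<Rightarrow> 'a set) \<Rightarrow> 'a set set" where
  "mediator_demand \<Omega> v B r pS AS =
     {S. S \<subseteq> \<Omega> \<and> (\<forall>T. T \<subseteq> \<Omega> \<longrightarrow>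
        mediator_revenue \<Omega> v B r (pS T) (AS T) T \<le> mediator_revenue \<Omega> v B r (pS S) (AS S) S)}"

definition v_OR :: "('b \<Rightarrow> 'a set \<Rightarrow> real) \<Rightarrow> 'b set \<Rightarrow> 'a set \<Rightarrow> real" where
  "v_OR v B S = Max {(\<Sum>b\<in>B. v b (A b)) | A. is_alloc B S A}"

definition OR_optimal :: "('b \<Rightarrow> 'a set \<Rightarrow> real) \<Rightarrow> 'b set \<Rightarrow> 'a set \<Rightarrow> ('b \<Rightarrow> 'a set) \<Rightarrow> bool" where
  "OR_optimal v B S A \<longleftrightarrow> is_alloc B S A \<and> (\<Sum>b\<in>B. v b (A b)) = v_OR v B S"

definition OR_demand :: "'a set \<Rightarrow> ('b \<Rightarrow> 'a set \<Rightarrow> real) \<Rightarrow> 'b set \<Rightarrow> ('a \<Rightarrow> real) \<Rightarrow> 'a set set" where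
  "OR_demand \<Omega> v B r = demand \<Omega> (v_OR v B) r"

end

theory Submission
  imports Defs "HOL-Library.FuncSet" "HOL-Library.Infinite_Set"
begin

definition indir :: "'a set \<Rightarrow> ('a set \<Rightarrow> real) \<Rightarrow> ('a \<Rightarrow> real) \<Rightarrow> real" where
  "indir \<Omega> u q = Max ((\<lambda>X. u X - price q X) ` Pow \<Omega>)"

lemma indir_ge: "finite \<Omega> \<Longrightarrow> X \<subseteq> \<Omega> \<Longrightarrow> u X - price q X \<le> indir \<Omega> u q"
  unfolding indir_def by (rule Max_ge) auto

lemma indir_ex: "finite \<Omega> \<Longrightarrow> \<exists>X\<subseteq>\<Omega>. u X - price q X = indir \<Omega> u q"
proof -
  assume f: "finite \<Omega>"
  have "indir \<Omega> u q \<in> (\<lambda>X. u X - price q X) ` Pow \<Omega>"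
    unfolding indir_def by (rule Max_in) (use f in auto)
  then show ?thesis by auto
qed

lemma demand_iff: "finite \<Omega> \<Longrightarrow> X \<in> demand \<Omega> u q \<longleftrightarrow> X \<subseteq> \<Omega> \<and> u X - price q X = indir \<Omega> u q"
proof -
  assume f: "finite \<Omega>"
  show ?thesis
  proof
    assume X: "X \<in> demand \<Omega> u q"
    then have "X \<subseteq> \<Omega>" by (simp add: demand_def)
    moreover obtain Y where "Y \<subseteq> \<Omega>" "u Y - price q Y = indir \<Omega> u q" using indir_ex[OF f] by blast
    moreover have "u Y - price q Y \<le> u X - price q X" using X `Y \<subseteq> \<Omega>` by (simp add: demand_def)
    ultimately show "X \<subseteq> \<Omega> \<and> u X - price q X = indir \<Omega> u q" using indir_ge[OF f, of X u q] by linarith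
  next
    assume "X \<subseteq> \<Omega> \<and> u X - price q X = indir \<Omega> u q"
    then show "X \<in> demand \<Omega> u q" using indir_ge[OF f] by (auto simp: demand_def)
  qed
qed

lemma demand_ne: "finite \<Omega> \<Longrightarrow> \<exists>X. X \<in> demand \<Omega> u q"
proof -
  assume f: "finite \<Omega>"
  obtain X where "X \<subseteq> \<Omega>" "u X - price q X = indir \<Omega> u q" using indir_ex[OF f] by blast
  then show ?thesis using demand_iff[OF f] by blast
qed

lemma price_cong: "(\<And>j. j \<in> X \<Longrightarrow> q j = q' j) \<Longrightarrow> price q X = price q' X"
  unfolding price_def by (rule sum.cong) auto

lemma indir_cong: "(\<And>j. j \<in> \<Omega> \<Longrightarrow> q j = q' j) \<Longrightarrow> indir \<Omega> u q = indir \<Omega> u q'"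
proof -
  assume h: "\<And>j. j \<in> \<Omega> \<Longrightarrow> q j = q' j"
  have "(\<lambda>X. u X - price q X) ` Pow \<Omega> = (\<lambda>X. u X - price q' X) ` Pow \<Omega>"
    by (rule image_cong) (auto intro!: price_cong h)
  then show ?thesis unfolding indir_def by simp
qed

lemma demand_cong: "(\<And>j. j \<in> \<Omega> \<Longrightarrow> q j = q' j) \<Longrightarrow> demand \<Omega> u q = demand \<Omega> u q'"
proof -
  assume h: "\<And>j. j \<in> \<Omega> \<Longrightarrow> q j = q' j"
  have e: "\<And>X. X \<subseteq> \<Omega> \<Longrightarrow> price q X = price q' X" by (rule price_cong) (auto intro: h)
  show ?thesis unfolding demand_def using e by auto
qed

lemma price_mono: "(\<And>j. j \<in> X \<Longrightarrow> q j \<le> q' j) \<Longrightarrow> price q X \<le> price q' X"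
  unfolding price_def by (rule sum_mono) auto

lemma price_nonneg: "(\<And>j. j \<in> X \<Longrightarrow> 0 \<le> q j) \<Longrightarrow> 0 \<le> price q X"
  unfolding price_def by (rule sum_nonneg) auto

lemma price_union: "finite X \<Longrightarrow> finite Y \<Longrightarrow> X \<inter> Y = {} \<Longrightarrow> price q (X \<union> Y) = price q X + price q Y"
  unfolding price_def by (rule sum.union_disjoint)

lemma price_diff: "finite Y \<Longrightarrow> X \<subseteq> Y \<Longrightarrow> price q Y = price q X + price q (Y - X)"
proof -
  assume "finite Y" "X \<subseteq> Y"
  then have "Y = X \<union> (Y - X)" "finite X" "finite (Y - X)" by (auto intro: finite_subset)
  then show ?thesis using price_union[of X "Y - X" q] by auto
qed

lemma price_UN: "finite B \<Longrightarrow> (\<And>b. b \<in> B \<Longrightarrow> finite (X b)) \<Longrightarrow>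
   (\<And>b b'. b \<in> B \<Longrightarrow> b' \<in> B \<Longrightarrow> b \<noteq> b' \<Longrightarrow> X b \<inter> X b' = {}) \<Longrightarrow>
   price q (\<Union>b\<in>B. X b) = (\<Sum>b\<in>B. price q (X b))"
  unfolding price_def by (rule sum.UNION_disjoint) auto


definition bump :: "('a \<Rightarrow> real) \<Rightarrow> 'a \<Rightarrow> real \<Rightarrow> 'a \<Rightarrow> real" where
  "bump x i a = x(i := x i + a)"

lemma price_bump: "finite X \<Longrightarrow> price (bump q i a) X = price q X + (if i \<in> X then a else 0)"
proof (cases "i \<in> X")
  case True
  assume f: "finite X"
  have "price (bump q i a) X = (q i + a) + price (bump q i a) (X - {i})"
    unfolding price_def using f True by (simp add: sum.remove bump_def)
  also have "price (bump q i a) (X - {i}) = price q (X - {i})"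
    by (rule price_cong) (auto simp: bump_def)
  also have "price q X = q i + price q (X - {i})" unfolding price_def using f True by (simp add: sum.remove)
  ultimately show ?thesis using True by simp
next
  case False
  then show ?thesis by (auto intro!: price_cong simp: bump_def)
qed

definition A_in :: "'a set \<Rightarrow> ('a set \<Rightarrow> real) \<Rightarrow> 'a \<Rightarrow> ('a \<Rightarrow> real) \<Rightarrow> real" where
  "A_in \<Omega> u i q = Max ((\<lambda>X. u X - price q X) ` {X. X \<subseteq> \<Omega> \<and> i \<in> X})"
definition A_out :: "'a set \<Rightarrow> ('a set \<Rightarrow> real) \<Rightarrow> 'a \<Rightarrow> ('a \<Rightarrow> real) \<Rightarrow> real" where
  "A_out \<Omega> u i q = Max ((\<lambda>X. u X - price q X) ` {X. X \<subseteq> \<Omega> \<and> i \<notin> X})"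

lemma fin_in: "finite \<Omega> \<Longrightarrow> finite {X. X \<subseteq> \<Omega> \<and> P X}"
  by (rule finite_subset[of _ "Pow \<Omega>"]) auto

lemma indir_split: "finite \<Omega> \<Longrightarrow> i \<in> \<Omega> \<Longrightarrow> indir \<Omega> u q = max (A_out \<Omega> u i q) (A_in \<Omega> u i q)"
proof -
  assume f: "finite \<Omega>" and i: "i \<in> \<Omega>"
  have e: "Pow \<Omega> = {X. X \<subseteq> \<Omega> \<and> i \<notin> X} \<union> {X. X \<subseteq> \<Omega> \<and> i \<in> X}" by auto
  have ne1: "{X. X \<subseteq> \<Omega> \<and> i \<notin> X} \<noteq> {}" by auto
  have ne2: "{X. X \<subseteq> \<Omega> \<and> i \<in> X} \<noteq> {}" using i by auto
  show ?thesis unfolding indir_def A_in_def A_out_def e image_Un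
    by (rule Max_Un) (use f ne1 ne2 in \<open>simp_all add: fin_in\<close>)
qed

lemma A_in_ge: "finite \<Omega> \<Longrightarrow> X \<subseteq> \<Omega> \<Longrightarrow> i \<in> X \<Longrightarrow> u X - price q X \<le> A_in \<Omega> u i q"
  unfolding A_in_def by (rule Max_ge) (simp_all add: fin_in)

lemma A_out_ge: "finite \<Omega> \<Longrightarrow> X \<subseteq> \<Omega> \<Longrightarrow> i \<notin> X \<Longrightarrow> u X - price q X \<le> A_out \<Omega> u i q"
  unfolding A_out_def by (rule Max_ge) (simp_all add: fin_in)

lemma A_in_ex: "finite \<Omega> \<Longrightarrow> i \<in> \<Omega> \<Longrightarrow> \<exists>X. X \<subseteq> \<Omega> \<and> i \<in> X \<and> u X - price q X = A_in \<Omega> u i q"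
proof -
  assume f: "finite \<Omega>" and i: "i \<in> \<Omega>"
  have fin: "finite ((\<lambda>X. u X - price q X) ` {X. X \<subseteq> \<Omega> \<and> i \<in> X})" by (rule finite_imageI[OF fin_in[OF f]])
  have ne: "(\<lambda>X. u X - price q X) ` {X. X \<subseteq> \<Omega> \<and> i \<in> X} \<noteq> {}" using i by (auto intro!: exI[of _ "{i}"])
  have "A_in \<Omega> u i q \<in> (\<lambda>X. u X - price q X) ` {X. X \<subseteq> \<Omega> \<and> i \<in> X}"
    unfolding A_in_def using Max_in[OF fin ne] .
  then obtain X where "X \<in> {X. X \<subseteq> \<Omega> \<and> i \<in> X}" "A_in \<Omega> u i q = u X - price q X" by (rule imageE)
  then show ?thesis by auto
qed

lemma A_out_ex: "finite \<Omega> \<Longrightarrow> \<exists>X. X \<subseteq> \<Omega> \<and> i \<notin> X \<and> u X - price q X = A_out \<Omega> u i q"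
proof -
  assume f: "finite \<Omega>"
  have fin: "finite ((\<lambda>X. u X - price q X) ` {X. X \<subseteq> \<Omega> \<and> i \<notin> X})" by (rule finite_imageI[OF fin_in[OF f]])
  have ne: "(\<lambda>X. u X - price q X) ` {X. X \<subseteq> \<Omega> \<and> i \<notin> X} \<noteq> {}" by (auto intro!: exI[of _ "{}"])
  have "A_out \<Omega> u i q \<in> (\<lambda>X. u X - price q X) ` {X. X \<subseteq> \<Omega> \<and> i \<notin> X}"
    unfolding A_out_def using Max_in[OF fin ne] .
  then obtain X where "X \<in> {X. X \<subseteq> \<Omega> \<and> i \<notin> X}" "A_out \<Omega> u i q = u X - price q X" by (rule imageE)
  then show ?thesis by auto
qed

lemma A_out_bump: "finite \<Omega> \<Longrightarrow> A_out \<Omega> u i (bump q i a) = A_out \<Omega> u i q"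
proof -
  assume f: "finite \<Omega>"
  have "(\<lambda>X. u X - price (bump q i a) X) ` {X. X \<subseteq> \<Omega> \<and> i \<notin> X} = (\<lambda>X. u X - price q X) ` {X. X \<subseteq> \<Omega> \<and> i \<notin> X}"
  proof (rule image_cong)
    fix X assume "X \<in> {X. X \<subseteq> \<Omega> \<and> i \<notin> X}"
    then have "finite X" "i \<notin> X" using finite_subset[OF _ f] by auto
    then show "u X - price (bump q i a) X = u X - price q X" by (simp add: price_bump)
  qed simp
  then show ?thesis unfolding A_out_def by simp
qed

lemma A_in_bump: "finite \<Omega> \<Longrightarrow> i \<in> \<Omega> \<Longrightarrow> A_in \<Omega> u i (bump q i a) = A_in \<Omega> u i q - a"
proof -
  assume f: "finite \<Omega>" and i: "i \<in> \<Omega>"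
  have "(\<lambda>X. u X - price (bump q i a) X) ` {X. X \<subseteq> \<Omega> \<and> i \<in> X} = (\<lambda>X. (u X - price q X) + (- a)) ` {X. X \<subseteq> \<Omega> \<and> i \<in> X}"
  proof (rule image_cong)
    fix X assume "X \<in> {X. X \<subseteq> \<Omega> \<and> i \<in> X}"
    then have "finite X" "i \<in> X" using finite_subset[OF _ f] by auto
    then show "u X - price (bump q i a) X = (u X - price q X) + (- a)" by (simp add: price_bump)
  qed simp
  also have "Max \<dots> = Max ((\<lambda>X. u X - price q X) ` {X. X \<subseteq> \<Omega> \<and> i \<in> X}) + (- a)"
    by (rule Max_add_commute) (use fin_in[OF f] i in \<open>auto intro!: exI[of _ "{i}"]\<close>)
  finally show ?thesis unfolding A_in_def by simp
qed


lemma bump_comm: "i \<noteq> j \<Longrightarrow> bump (bump x i a) j c = bump (bump x j c) i a"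
  unfolding bump_def by (rule ext) auto

lemma bump_other: "k \<noteq> i \<Longrightarrow> bump x i a k = x k"
  unfolding bump_def by simp

lemma bump_same: "bump x i a i = x i + a"
  unfolding bump_def by simp

locale mkt =
  fixes \<Omega> :: "'a set" and B :: "'b set" and v :: "'b \<Rightarrow> 'a set \<Rightarrow> real"
  assumes finO: "finite \<Omega>" and finB: "finite B"
    and monoV: "\<And>b. b \<in> B \<Longrightarrow> monotone_valuation \<Omega> (v b)"
    and gsV: "\<And>b. b \<in> B \<Longrightarrow> gross_substitute \<Omega> (v b)"
begin

lemma v_empty: "b \<in> B \<Longrightarrow> v b {} = 0"
  using monoV unfolding monotone_valuation_def by blast

lemma v_mono: "b \<in> B \<Longrightarrow> X \<subseteq> Y \<Longrightarrow> Y \<subseteq> \<Omega> \<Longrightarrow> v b X \<le> v b Y"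
  using monoV unfolding monotone_valuation_def by blast

lemma v_nonneg: "b \<in> B \<Longrightarrow> X \<subseteq> \<Omega> \<Longrightarrow> 0 \<le> v b X"
  using v_mono[of b "{}" X] v_empty[of b] by simp

lemma gs_use: "b \<in> B \<Longrightarrow> (\<And>j. j \<in> \<Omega> \<Longrightarrow> 0 \<le> p1 j \<and> p1 j \<le> p2 j) \<Longrightarrow> D1 \<in> demand \<Omega> (v b) p1 \<Longrightarrow>
   \<exists>D2\<in>demand \<Omega> (v b) p2. {j\<in>D1. p1 j = p2 j} \<subseteq> D2"
  using gsV[of b] unfolding gross_substitute_def by blast

lemma pair_sub:
  assumes b: "b \<in> B" and i: "i \<in> \<Omega>" and j: "j \<in> \<Omega>" and ij: "i \<noteq> j"
    and x0: "\<And>k. k \<in> \<Omega> \<Longrightarrow> 0 \<le> x k" and a: "0 \<le> a" and c: "0 \<le> c"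
  shows "indir \<Omega> (v b) (bump (bump x j c) i a) - indir \<Omega> (v b) (bump x j c)
     \<le> indir \<Omega> (v b) (bump x i a) - indir \<Omega> (v b) x"
proof -
  define u where "u = v b"
  define y where "y = bump x j c"
  define ax where "ax = A_out \<Omega> u i x"
  define bx where "bx = A_in \<Omega> u i x"
  define ay where "ay = A_out \<Omega> u i y"
  define by' where "by' = A_in \<Omega> u i y"
  have e1: "indir \<Omega> u x = max ax bx" unfolding ax_def bx_def using indir_split[OF finO i] .
  have e2: "indir \<Omega> u (bump x i a) = max ax (bx - a)"
    unfolding ax_def bx_def using indir_split[OF finO i] A_out_bump[OF finO] A_in_bump[OF finO i] by simp
  have e3: "indir \<Omega> u y = max ay by'" unfolding ay_def by'_def using indir_split[OF finO i] .
  have e4: "indir \<Omega> u (bump y i a) = max ay (by' - a)"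
    unfolding ay_def by'_def using indir_split[OF finO i] A_out_bump[OF finO] A_in_bump[OF finO i] by simp
  define t where "t = bx - ax"
  have tge: "- x i \<le> t"
  proof -
    obtain X0 where X0: "X0 \<subseteq> \<Omega>" "i \<notin> X0" "u X0 - price x X0 = ax" using A_out_ex[OF finO, of i u x] unfolding ax_def by auto
    have fX0: "finite X0" using X0(1) finO by (rule finite_subset)
    have "u (insert i X0) - price x (insert i X0) \<le> bx" unfolding bx_def
      by (rule A_in_ge[OF finO]) (use X0 i in auto)
    moreover have "price x (insert i X0) = x i + price x X0" unfolding price_def using fX0 X0(2) by simp
    moreover have "u X0 \<le> u (insert i X0)" unfolding u_def by (rule v_mono[OF b]) (use X0 i in auto)
    ultimately show ?thesis unfolding t_def using X0(3) by linarith
  qed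
  define p1 where "p1 = bump x i t"
  define p2 where "p2 = bump p1 j c"
  have p10: "\<And>k. k \<in> \<Omega> \<Longrightarrow> 0 \<le> p1 k \<and> p1 k \<le> p2 k"
    using x0 tge c unfolding p1_def p2_def bump_def by auto
  have in1: "A_in \<Omega> u i p1 = ax" unfolding p1_def using A_in_bump[OF finO i, of u x t] unfolding bx_def[symmetric] t_def by simp
  have out1: "A_out \<Omega> u i p1 = ax" unfolding p1_def using A_out_bump[OF finO] unfolding ax_def by simp
  obtain D1 where D1: "D1 \<subseteq> \<Omega>" "i \<in> D1" "u D1 - price p1 D1 = A_in \<Omega> u i p1" using A_in_ex[OF finO i, of u p1] by auto
  have "indir \<Omega> u p1 = ax" using indir_split[OF finO i, of u p1] in1 out1 by simp
  then have D1d: "D1 \<in> demand \<Omega> (v b) p1" unfolding demand_iff[OF finO] u_def[symmetric] using D1 in1 by simp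
  obtain D2 where D2: "D2 \<in> demand \<Omega> (v b) p2" "{k\<in>D1. p1 k = p2 k} \<subseteq> D2"
    using gs_use[OF b p10 D1d] by auto
  have "p1 i = p2 i" unfolding p2_def using ij bump_other by metis
  then have iD2: "i \<in> D2" using D2(2) D1(2) by auto
  have D2v: "D2 \<subseteq> \<Omega>" "u D2 - price p2 D2 = indir \<Omega> u p2" using D2(1) unfolding demand_iff[OF finO] u_def by auto
  have "u D2 - price p2 D2 \<le> A_in \<Omega> u i p2" by (rule A_in_ge[OF finO D2v(1) iD2])
  then have "A_out \<Omega> u i p2 \<le> A_in \<Omega> u i p2" using D2v(2) indir_split[OF finO i, of u p2] by simp
  moreover have "p2 = bump y i t" unfolding p2_def p1_def y_def using bump_comm[OF ij] by simp
  ultimately have "ay \<le> by' - t" unfolding ay_def by'_def using A_in_bump[OF finO i] A_out_bump[OF finO] by simp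
  then have key: "bx - ax \<le> by' - ay" unfolding t_def by simp
  have "max ay (by' - a) - max ay by' \<le> max ax (bx - a) - max ax bx"
    using key a by (simp add: max_def split: if_splits)
  then show ?thesis using e1 e2 e3 e4 unfolding u_def y_def by simp
qed


definition Vs :: "('a \<Rightarrow> real) \<Rightarrow> real" where
  "Vs q = (\<Sum>b\<in>B. indir \<Omega> (v b) q)"

lemma Vs_cong: "(\<And>k. k \<in> \<Omega> \<Longrightarrow> p k = q k) \<Longrightarrow> Vs p = Vs q"
  unfolding Vs_def by (rule sum.cong) (auto intro: indir_cong)

lemma pair_Vs:
  assumes i: "i \<in> \<Omega>" and j: "j \<in> \<Omega>" and ij: "i \<noteq> j"
    and x0: "\<And>k. k \<in> \<Omega> \<Longrightarrow> 0 \<le> x k" and a: "0 \<le> a" and c: "0 \<le> c"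
  shows "Vs (bump (bump x j c) i a) - Vs (bump x j c) \<le> Vs (bump x i a) - Vs x"
proof -
  have "(\<Sum>b\<in>B. indir \<Omega> (v b) (bump (bump x j c) i a) - indir \<Omega> (v b) (bump x j c))
     \<le> (\<Sum>b\<in>B. indir \<Omega> (v b) (bump x i a) - indir \<Omega> (v b) x)"
    by (rule sum_mono) (rule pair_sub[OF _ i j ij x0 a c])
  then show ?thesis unfolding Vs_def sum_subtractf by simp
qed

lemma dd1:
  assumes "finite J"
  shows "J \<subseteq> \<Omega> \<Longrightarrow> i \<in> \<Omega> \<Longrightarrow> i \<notin> J \<Longrightarrow> 0 \<le> a \<Longrightarrow> (\<And>k. k \<in> \<Omega> \<Longrightarrow> 0 \<le> x k) \<Longrightarrow>
    (\<And>k. k \<in> \<Omega> \<Longrightarrow> x k \<le> y k) \<Longrightarrow> (\<And>k. k \<in> \<Omega> \<Longrightarrow> k \<notin> J \<Longrightarrow> y k = x k) \<Longrightarrow>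
    Vs (bump y i a) - Vs y \<le> Vs (bump x i a) - Vs x"
  using assms
proof (induction J arbitrary: y rule: finite_induct)
  case empty
  have "Vs y = Vs x" by (rule Vs_cong) (use empty.prems(7) in simp)
  moreover have "Vs (bump y i a) = Vs (bump x i a)" by (rule Vs_cong) (use empty.prems(7) in \<open>auto simp add: bump_def\<close>)
  ultimately show ?case by simp
next
  case (insert j J)
  note P = insert.prems
  define y' where "y' = y(j := x j)"
  have ij: "i \<noteq> j" using P(3) by auto
  have jO: "j \<in> \<Omega>" using P(1) by auto
  have IH: "Vs (bump y' i a) - Vs y' \<le> Vs (bump x i a) - Vs x"
  proof (rule insert.IH)
    show "J \<subseteq> \<Omega>" using P(1) by simp
    show "i \<in> \<Omega>" by (rule P(2))
    show "i \<notin> J" using P(3) by simp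
    show "0 \<le> a" by (rule P(4))
    show "\<And>k. k \<in> \<Omega> \<Longrightarrow> 0 \<le> x k" by (rule P(5))
    show "\<And>k. k \<in> \<Omega> \<Longrightarrow> x k \<le> y' k" using P(6) by (simp add: y'_def)
    show "\<And>k. k \<in> \<Omega> \<Longrightarrow> k \<notin> J \<Longrightarrow> y' k = x k" using P(7) by (simp add: y'_def)
  qed
  have y'0: "\<And>k. k \<in> \<Omega> \<Longrightarrow> 0 \<le> y' k" using P(5) P(6) unfolding y'_def by (metis fun_upd_apply order.trans)
  have cj: "0 \<le> y j - x j" using P(6)[OF jO] by simp
  have "Vs (bump (bump y' j (y j - x j)) i a) - Vs (bump y' j (y j - x j)) \<le> Vs (bump y' i a) - Vs y'"
    by (rule pair_Vs[OF P(2) jO ij y'0 P(4) cj])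
  moreover have "bump y' j (y j - x j) = y" unfolding bump_def y'_def by (rule ext) simp
  ultimately show ?case using IH by simp
qed

lemma dd2:
  assumes "finite I"
  shows "I \<subseteq> \<Omega> \<Longrightarrow> I \<inter> J = {} \<Longrightarrow> finite J \<Longrightarrow> J \<subseteq> \<Omega> \<Longrightarrow> (\<And>k. k \<in> \<Omega> \<Longrightarrow> 0 \<le> x k) \<Longrightarrow>
    (\<And>k. k \<in> \<Omega> \<Longrightarrow> x k \<le> y k) \<Longrightarrow> (\<And>k. k \<in> \<Omega> \<Longrightarrow> x k \<le> z k) \<Longrightarrow>
    (\<And>k. k \<in> \<Omega> \<Longrightarrow> k \<notin> J \<Longrightarrow> y k = x k) \<Longrightarrow> (\<And>k. k \<in> \<Omega> \<Longrightarrow> k \<notin> I \<Longrightarrow> z k = x k) \<Longrightarrow>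
    Vs (\<lambda>k. y k + z k - x k) - Vs y \<le> Vs z - Vs x"
  using assms
proof (induction I arbitrary: z rule: finite_induct)
  case empty
  have "Vs (\<lambda>k. y k + z k - x k) = Vs y" by (rule Vs_cong) (use empty.prems(9) in simp)
  moreover have "Vs z = Vs x" by (rule Vs_cong) (use empty.prems(9) in simp)
  ultimately show ?case by simp
next
  case (insert i I)
  note P = insert.prems
  define z' where "z' = z(i := x i)"
  define w where "w = (\<lambda>k. y k + z' k - x k)"
  have iO: "i \<in> \<Omega>" using P(1) by auto
  have iJ: "i \<notin> J" using P(2) by auto
  have IH: "Vs w - Vs y \<le> Vs z' - Vs x" unfolding w_def
  proof (rule insert.IH)
    show "I \<subseteq> \<Omega>" using P(1) by simp
    show "I \<inter> J = {}" using P(2) by auto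
    show "finite J" by (rule P(3))
    show "J \<subseteq> \<Omega>" by (rule P(4))
    show "\<And>k. k \<in> \<Omega> \<Longrightarrow> 0 \<le> x k" by (rule P(5))
    show "\<And>k. k \<in> \<Omega> \<Longrightarrow> x k \<le> y k" by (rule P(6))
    show "\<And>k. k \<in> \<Omega> \<Longrightarrow> x k \<le> z' k" using P(7) by (simp add: z'_def)
    show "\<And>k. k \<in> \<Omega> \<Longrightarrow> k \<notin> J \<Longrightarrow> y k = x k" by (rule P(8))
    show "\<And>k. k \<in> \<Omega> \<Longrightarrow> k \<notin> I \<Longrightarrow> z' k = x k" using P(9) by (simp add: z'_def)
  qed
  have z'0: "\<And>k. k \<in> \<Omega> \<Longrightarrow> 0 \<le> z' k" using P(5) P(7) unfolding z'_def by (metis fun_upd_apply order.trans)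
  have "Vs (bump w i (z i - x i)) - Vs w \<le> Vs (bump z' i (z i - x i)) - Vs z'"
  proof (rule dd1[OF P(3,4) iO iJ])
    show "0 \<le> z i - x i" using P(7)[OF iO] by simp
    show "\<And>k. k \<in> \<Omega> \<Longrightarrow> 0 \<le> z' k" by (rule z'0)
    show "\<And>k. k \<in> \<Omega> \<Longrightarrow> z' k \<le> w k" using P(6) by (simp add: w_def)
    show "\<And>k. k \<in> \<Omega> \<Longrightarrow> k \<notin> J \<Longrightarrow> w k = z' k" using P(8) by (simp add: w_def)
  qed
  moreover have "bump w i (z i - x i) = (\<lambda>k. y k + z k - x k)" unfolding bump_def w_def z'_def by (rule ext) simp
  moreover have "bump z' i (z i - x i) = z" unfolding bump_def z'_def by (rule ext) simp
  ultimately show ?case using IH by simp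
qed

lemma Vs_submod:
  assumes p0: "\<And>k. k \<in> \<Omega> \<Longrightarrow> 0 \<le> p k" and q0: "\<And>k. k \<in> \<Omega> \<Longrightarrow> 0 \<le> q k"
  shows "Vs (\<lambda>k. min (p k) (q k)) + Vs (\<lambda>k. max (p k) (q k)) \<le> Vs p + Vs q"
proof -
  have "Vs (\<lambda>k. p k + q k - min (p k) (q k)) - Vs p \<le> Vs q - Vs (\<lambda>k. min (p k) (q k))"
  proof (rule dd2[of "{k\<in>\<Omega>. p k < q k}" "{k\<in>\<Omega>. q k < p k}"])
    show "finite {k\<in>\<Omega>. p k < q k}" using finO by simp
    show "finite {k\<in>\<Omega>. q k < p k}" using finO by simp
  qed (use p0 q0 in \<open>auto simp: min_def\<close>)
  moreover have "Vs (\<lambda>k. p k + q k - min (p k) (q k)) = Vs (\<lambda>k. max (p k) (q k))"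
    by (rule Vs_cong) (simp add: min_def max_def)
  ultimately show ?thesis by simp
qed


definition L :: "('a \<Rightarrow> real) \<Rightarrow> real" where
  "L q = Vs q + price q \<Omega>"

definition welf :: "('a \<Rightarrow> real) \<Rightarrow> ('b \<Rightarrow> 'a set) \<Rightarrow> real" where
  "welf c X = (\<Sum>b\<in>B. v b (X b)) + price c (\<Omega> - (\<Union>b\<in>B. X b))"

definition Walr :: "('a \<Rightarrow> real) \<Rightarrow> ('a \<Rightarrow> real) \<Rightarrow> ('b \<Rightarrow> 'a set) \<Rightarrow> bool" where
  "Walr c q X \<longleftrightarrow> is_alloc B \<Omega> X \<and> (\<forall>b\<in>B. X b \<in> demand \<Omega> (v b) q) \<and> (\<forall>j\<in>\<Omega>. c j \<le> q j) \<and>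
     (\<forall>j\<in>\<Omega> - (\<Union>b\<in>B. X b). q j = c j)"

lemma alloc_price: "is_alloc B T X \<Longrightarrow> T \<subseteq> \<Omega> \<Longrightarrow> price q (\<Union>b\<in>B. X b) = (\<Sum>b\<in>B. price q (X b))"
  unfolding is_alloc_def by (rule price_UN[OF finB]) (auto intro: finite_subset[OF _ finO])

lemma alloc_sub: "is_alloc B T X \<Longrightarrow> (\<Union>b\<in>B. X b) \<subseteq> T"
  unfolding is_alloc_def by auto

lemma alloc_mono: "is_alloc B T X \<Longrightarrow> T \<subseteq> T' \<Longrightarrow> is_alloc B T' X"
  unfolding is_alloc_def by auto

lemma G1:
  assumes X: "is_alloc B \<Omega> X" and cq: "\<And>j. j \<in> \<Omega> \<Longrightarrow> c j \<le> q j"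
  shows "welf c X \<le> L q"
proof -
  have sub: "(\<Union>b\<in>B. X b) \<subseteq> \<Omega>" using alloc_sub[OF X] .
  have "(\<Sum>b\<in>B. v b (X b) - price q (X b)) \<le> Vs q" unfolding Vs_def
    by (rule sum_mono) (rule indir_ge[OF finO], use X in \<open>auto simp: is_alloc_def\<close>)
  then have 1: "(\<Sum>b\<in>B. v b (X b)) - price q (\<Union>b\<in>B. X b) \<le> Vs q"
    using alloc_price[OF X order.refl] by (simp add: sum_subtractf)
  have 2: "price q \<Omega> = price q (\<Union>b\<in>B. X b) + price q (\<Omega> - (\<Union>b\<in>B. X b))"
    by (rule price_diff[OF finO sub])
  have 3: "price c (\<Omega> - (\<Union>b\<in>B. X b)) \<le> price q (\<Omega> - (\<Union>b\<in>B. X b))"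
    by (rule price_mono) (use cq in auto)
  show ?thesis unfolding welf_def L_def using 1 2 3 by linarith
qed

lemma G2:
  assumes W: "Walr c q X"
  shows "L q = welf c X"
proof -
  have X: "is_alloc B \<Omega> X" using W by (simp add: Walr_def)
  have sub: "(\<Union>b\<in>B. X b) \<subseteq> \<Omega>" using alloc_sub[OF X] .
  have "Vs q = (\<Sum>b\<in>B. v b (X b) - price q (X b))" unfolding Vs_def
    by (rule sum.cong) (use W in \<open>auto simp: Walr_def demand_iff[OF finO]\<close>)
  then have 1: "Vs q = (\<Sum>b\<in>B. v b (X b)) - price q (\<Union>b\<in>B. X b)"
    using alloc_price[OF X order.refl] by (simp add: sum_subtractf)
  have 2: "price q \<Omega> = price q (\<Union>b\<in>B. X b) + price q (\<Omega> - (\<Union>b\<in>B. X b))"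
    by (rule price_diff[OF finO sub])
  have 3: "price c (\<Omega> - (\<Union>b\<in>B. X b)) = price q (\<Omega> - (\<Union>b\<in>B. X b))"
    by (rule price_cong) (use W in \<open>auto simp: Walr_def\<close>)
  show ?thesis unfolding welf_def L_def using 1 2 3 by linarith
qed

lemma G3:
  assumes cq: "\<And>j. j \<in> \<Omega> \<Longrightarrow> c j \<le> q j" and Y: "is_alloc B \<Omega> Y" and le: "L q \<le> welf c Y"
  shows "Walr c q Y"
proof -
  have sub: "(\<Union>b\<in>B. Y b) \<subseteq> \<Omega>" using alloc_sub[OF Y] .
  define d where "d b = indir \<Omega> (v b) q - (v b (Y b) - price q (Y b))" for b
  have d0: "\<And>b. b \<in> B \<Longrightarrow> 0 \<le> d b" unfolding d_def using indir_ge[OF finO] Y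
    by (auto simp: is_alloc_def)
  have "Vs q = (\<Sum>b\<in>B. d b) + (\<Sum>b\<in>B. v b (Y b)) - (\<Sum>b\<in>B. price q (Y b))"
    unfolding Vs_def d_def by (simp add: sum_subtractf sum.distrib)
  then have 1: "Vs q = (\<Sum>b\<in>B. d b) + (\<Sum>b\<in>B. v b (Y b)) - price q (\<Union>b\<in>B. Y b)"
    using alloc_price[OF Y order.refl] by simp
  have 2: "price q \<Omega> = price q (\<Union>b\<in>B. Y b) + price q (\<Omega> - (\<Union>b\<in>B. Y b))"
    by (rule price_diff[OF finO sub])
  define e where "e j = q j - c j" for j
  have e0: "\<And>j. j \<in> \<Omega> - (\<Union>b\<in>B. Y b) \<Longrightarrow> 0 \<le> e j" unfolding e_def using cq by auto
  have 3: "price q (\<Omega> - (\<Union>b\<in>B. Y b)) = price c (\<Omega> - (\<Union>b\<in>B. Y b)) + (\<Sum>j\<in>\<Omega> - (\<Union>b\<in>B. Y b). e j)"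
    unfolding price_def e_def by (simp add: sum_subtractf)
  have tot: "(\<Sum>b\<in>B. d b) + (\<Sum>j\<in>\<Omega> - (\<Union>b\<in>B. Y b). e j) \<le> 0"
    using le 1 2 3 unfolding L_def welf_def by linarith
  have s1: "0 \<le> (\<Sum>b\<in>B. d b)" by (rule sum_nonneg) (rule d0)
  have s2: "0 \<le> (\<Sum>j\<in>\<Omega> - (\<Union>b\<in>B. Y b). e j)" by (rule sum_nonneg) (rule e0)
  have z1: "(\<Sum>b\<in>B. d b) = 0" using tot s1 s2 by linarith
  have z2: "(\<Sum>j\<in>\<Omega> - (\<Union>b\<in>B. Y b). e j) = 0" using tot s1 s2 by linarith
  have D: "\<forall>b\<in>B. d b = 0" using z1 sum_nonneg_eq_0_iff[OF finB, of d] d0 by blast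
  have E: "\<forall>j\<in>\<Omega> - (\<Union>b\<in>B. Y b). e j = 0"
    using z2 sum_nonneg_eq_0_iff[of "\<Omega> - (\<Union>b\<in>B. Y b)" e] e0 finO by blast
  show ?thesis unfolding Walr_def
  proof (intro conjI)
    show "is_alloc B \<Omega> Y" by (rule Y)
    show "\<forall>b\<in>B. Y b \<in> demand \<Omega> (v b) q" using D Y unfolding d_def demand_iff[OF finO] is_alloc_def by auto
    show "\<forall>j\<in>\<Omega>. c j \<le> q j" using cq by auto
    show "\<forall>j\<in>\<Omega> - (\<Union>b\<in>B. Y b). q j = c j" using E unfolding e_def by auto
  qed
qed

lemma Walr_cong: "Walr c q X \<Longrightarrow> (\<And>j. j \<in> \<Omega> \<Longrightarrow> q j = q' j) \<Longrightarrow> (\<And>j. j \<in> \<Omega> \<Longrightarrow> c j = c' j) \<Longrightarrow> Walr c' q' X"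
proof -
  assume W: "Walr c q X" and h: "\<And>j. j \<in> \<Omega> \<Longrightarrow> q j = q' j" and h2: "\<And>j. j \<in> \<Omega> \<Longrightarrow> c j = c' j"
  have "demand \<Omega> (v b) q = demand \<Omega> (v b) q'" for b by (rule demand_cong) (rule h)
  then show ?thesis using W h h2 unfolding Walr_def by auto
qed

lemma Walr_meet:
  assumes c0: "\<And>j. j \<in> \<Omega> \<Longrightarrow> 0 \<le> c j" and cc: "\<And>j. j \<in> \<Omega> \<Longrightarrow> c j \<le> c' j"
    and W0: "Walr c p0 X0" and W1: "Walr c' q X1"
  shows "Walr c (\<lambda>k. min (p0 k) (q k)) X0"
proof (rule G3)
  have p0c: "\<And>j. j \<in> \<Omega> \<Longrightarrow> c j \<le> p0 j" using W0 by (simp add: Walr_def)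
  have qc: "\<And>j. j \<in> \<Omega> \<Longrightarrow> c' j \<le> q j" using W1 by (simp add: Walr_def)
  show "\<And>j. j \<in> \<Omega> \<Longrightarrow> c j \<le> min (p0 j) (q j)" using p0c qc cc by (meson min.boundedI order.trans)
  show "is_alloc B \<Omega> X0" using W0 by (simp add: Walr_def)
  have sub: "Vs (\<lambda>k. min (p0 k) (q k)) + Vs (\<lambda>k. max (p0 k) (q k)) \<le> Vs p0 + Vs q"
    by (rule Vs_submod) (use c0 p0c qc cc in \<open>force+\<close>)
  have pr: "price (\<lambda>k. min (p0 k) (q k)) \<Omega> + price (\<lambda>k. max (p0 k) (q k)) \<Omega> = price p0 \<Omega> + price q \<Omega>"
    unfolding price_def sum.distrib[symmetric] by (rule sum.cong) (auto simp: min_def max_def)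
  have "welf c' X1 \<le> L (\<lambda>k. max (p0 k) (q k))"
    by (rule G1) (use W1 in \<open>auto simp: Walr_def\<close>)
  moreover have "L q = welf c' X1" by (rule G2[OF W1])
  moreover have "L p0 = welf c X0" by (rule G2[OF W0])
  ultimately show "L (\<lambda>k. min (p0 k) (q k)) \<le> welf c X0" using sub pr unfolding L_def by linarith
qed


lemma dem_bound:
  assumes b: "b \<in> B" and X: "X \<in> demand \<Omega> (v b) q" and j: "j \<in> X"
  shows "q j \<le> v b \<Omega>"
proof -
  have XO: "X \<subseteq> \<Omega>" using X by (simp add: demand_def)
  have fX: "finite X" using XO finO by (rule finite_subset)
  have all: "\<forall>T. T \<subseteq> \<Omega> \<longrightarrow> v b T - price q T \<le> v b X - price q X" using X by (simp add: demand_def)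
  have "v b (X - {j}) - price q (X - {j}) \<le> v b X - price q X" using all XO by (meson Diff_subset order_trans)
  moreover have "price q X = q j + price q (X - {j})" unfolding price_def using fX j by (simp add: sum.remove)
  moreover have "v b X \<le> v b \<Omega>" by (rule v_mono[OF b XO order.refl])
  moreover have "0 \<le> v b (X - {j})" by (rule v_nonneg[OF b]) (use XO in auto)
  ultimately show ?thesis by linarith
qed

definition Vmax :: real where "Vmax = (\<Sum>b\<in>B. v b \<Omega>)"

lemma Vmax_ge: "b \<in> B \<Longrightarrow> v b \<Omega> \<le> Vmax"
  unfolding Vmax_def by (rule member_le_sum) (auto intro: v_nonneg finB)

lemma Vmax_nonneg: "0 \<le> Vmax"
  unfolding Vmax_def by (rule sum_nonneg) (auto intro: v_nonneg)

definition pers :: "real \<Rightarrow> ('b \<Rightarrow> 'a set) \<Rightarrow> 'b \<Rightarrow> ('a \<Rightarrow> real) \<Rightarrow> 'a \<Rightarrow> real" where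
  "pers \<epsilon> H b p = (\<lambda>j. if j \<in> H b then p j else p j + \<epsilon>)"

definition Inv :: "('a \<Rightarrow> real) \<Rightarrow> real \<Rightarrow> ('a \<Rightarrow> real) \<Rightarrow> ('b \<Rightarrow> 'a set) \<Rightarrow> bool" where
  "Inv c \<epsilon> p H \<longleftrightarrow> is_alloc B \<Omega> H \<and> (\<forall>b\<in>B. \<exists>D\<in>demand \<Omega> (v b) (pers \<epsilon> H b p). H b \<subseteq> D) \<and>
     (\<forall>j\<in>\<Omega>. c j \<le> p j \<and> p j \<le> c j + Vmax) \<and> (\<forall>j\<in>\<Omega> - (\<Union>b\<in>B. H b). p j = c j)"

lemma auction_step:
  assumes c0: "\<And>j. j \<in> \<Omega> \<Longrightarrow> 0 \<le> c j" and e: "0 < \<epsilon>"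
    and I: "Inv c \<epsilon> p H" and b: "b \<in> B" and nd: "H b \<notin> demand \<Omega> (v b) (pers \<epsilon> H b p)"
  shows "\<exists>p' H'. Inv c \<epsilon> p' H' \<and> price p \<Omega> + \<epsilon> \<le> price p' \<Omega>"
proof -
  obtain D where D: "D \<in> demand \<Omega> (v b) (pers \<epsilon> H b p)" "H b \<subseteq> D" using I b unfolding Inv_def by blast
  have DO: "D \<subseteq> \<Omega>" using D(1) by (simp add: demand_def)
  have HD: "H b \<noteq> D" using D(1) nd by auto
  then obtain j0 where j0: "j0 \<in> D" "j0 \<notin> H b" using D(2) by blast
  define p' where "p' = (\<lambda>j. if j \<in> D - H b then p j + \<epsilon> else p j)"
  define H' where "H' = (\<lambda>b'. if b' = b then D else H b' - D)"
  have Hal: "is_alloc B \<Omega> H" using I by (simp add: Inv_def)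
  have pp': "\<And>j. p j \<le> p' j" unfolding p'_def using e by auto
  have pers_b: "pers \<epsilon> H' b p' = pers \<epsilon> H b p"
    unfolding pers_def H'_def p'_def by (rule ext) (use D(2) in auto)
  have inv1: "is_alloc B \<Omega> H'" using Hal DO unfolding is_alloc_def H'_def by (auto; blast)
  have inv2: "\<forall>b'\<in>B. \<exists>D\<in>demand \<Omega> (v b') (pers \<epsilon> H' b' p'). H' b' \<subseteq> D"
  proof
    fix b' assume b': "b' \<in> B"
    show "\<exists>D\<in>demand \<Omega> (v b') (pers \<epsilon> H' b' p'). H' b' \<subseteq> D"
    proof (cases "b' = b")
      case True
      then show ?thesis using D(1) pers_b by (auto simp: H'_def)
    next
      case False
      obtain D1 where D1: "D1 \<in> demand \<Omega> (v b') (pers \<epsilon> H b' p)" "H b' \<subseteq> D1" using I b' unfolding Inv_def by blast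
      have mono: "\<And>j. j \<in> \<Omega> \<Longrightarrow> 0 \<le> pers \<epsilon> H b' p j \<and> pers \<epsilon> H b' p j \<le> pers \<epsilon> H' b' p' j"
      proof -
        fix j assume j: "j \<in> \<Omega>"
        have "0 \<le> p j" using I j c0[OF j] unfolding Inv_def by force
        then show "0 \<le> pers \<epsilon> H b' p j \<and> pers \<epsilon> H b' p j \<le> pers \<epsilon> H' b' p' j"
          using pp'[of j] e False unfolding pers_def H'_def by auto
      qed
      obtain D2 where D2: "D2 \<in> demand \<Omega> (v b') (pers \<epsilon> H' b' p')" "{j\<in>D1. pers \<epsilon> H b' p j = pers \<epsilon> H' b' p' j} \<subseteq> D2"
        using gs_use[OF b' mono D1(1)] by blast
      have "H' b' \<subseteq> {j\<in>D1. pers \<epsilon> H b' p j = pers \<epsilon> H' b' p' j}"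
        using D1(2) False unfolding H'_def pers_def p'_def by auto
      then show ?thesis using D2 by blast
    qed
  qed
  have inv3: "\<forall>j\<in>\<Omega>. c j \<le> p' j \<and> p' j \<le> c j + Vmax"
  proof
    fix j assume j: "j \<in> \<Omega>"
    show "c j \<le> p' j \<and> p' j \<le> c j + Vmax"
    proof (cases "j \<in> D - H b")
      case True
      have "pers \<epsilon> H b p j \<le> v b \<Omega>" by (rule dem_bound[OF b D(1)]) (use True in auto)
      then have "p' j \<le> Vmax" using True Vmax_ge[OF b] unfolding p'_def pers_def by auto
      then show ?thesis using I j pp'[of j] c0[OF j] unfolding Inv_def by force
    next
      case False
      then show ?thesis using I j unfolding Inv_def p'_def by auto
    qed
  qed
  have inv4: "\<forall>j\<in>\<Omega> - (\<Union>b\<in>B. H' b). p' j = c j"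
  proof
    fix j assume j: "j \<in> \<Omega> - (\<Union>b\<in>B. H' b)"
    then have jD: "j \<notin> D" using b unfolding H'_def by auto
    have "j \<notin> H b'" if "b' \<in> B" for b'
    proof (cases "b' = b")
      case True then show ?thesis using jD D(2) by auto
    next
      case False then show ?thesis using j that jD unfolding H'_def by auto
    qed
    then have "j \<in> \<Omega> - (\<Union>b\<in>B. H b)" using j by auto
    then show "p' j = c j" using I jD unfolding Inv_def p'_def by auto
  qed
  have "p' j0 - p j0 \<le> (\<Sum>j\<in>\<Omega>. p' j - p j)"
    by (rule member_le_sum) (use j0 DO pp' finO in auto)
  then have "price p \<Omega> + \<epsilon> \<le> price p' \<Omega>" using j0 unfolding price_def p'_def sum_subtractf by auto
  then show ?thesis using inv1 inv2 inv3 inv4 unfolding Inv_def by blast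
qed


lemma auction_run:
  assumes c0: "\<And>j. j \<in> \<Omega> \<Longrightarrow> 0 \<le> c j" and e: "0 < \<epsilon>"
  shows "Inv c \<epsilon> p H \<Longrightarrow> (\<Sum>j\<in>\<Omega>. c j + Vmax - p j) \<le> real n * \<epsilon> \<Longrightarrow>
    \<exists>p' H'. Inv c \<epsilon> p' H' \<and> (\<forall>b\<in>B. H' b \<in> demand \<Omega> (v b) (pers \<epsilon> H' b p'))"
proof (induction n arbitrary: p H)
  case 0
  show ?case
  proof (cases "\<forall>b\<in>B. H b \<in> demand \<Omega> (v b) (pers \<epsilon> H b p)")
    case True then show ?thesis using "0.prems"(1) by blast
  next
    case False
    then obtain b where b: "b \<in> B" "H b \<notin> demand \<Omega> (v b) (pers \<epsilon> H b p)" by blast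
    obtain p' H' where st: "Inv c \<epsilon> p' H'" "price p \<Omega> + \<epsilon> \<le> price p' \<Omega>"
      using auction_step[OF c0 e "0.prems"(1) b] by blast
    have "0 \<le> (\<Sum>j\<in>\<Omega>. c j + Vmax - p' j)" by (rule sum_nonneg) (use st(1) in \<open>auto simp: Inv_def\<close>)
    moreover have "(\<Sum>j\<in>\<Omega>. c j + Vmax - p' j) = (\<Sum>j\<in>\<Omega>. c j + Vmax) - price p' \<Omega>"
      unfolding price_def by (simp add: sum_subtractf)
    moreover have "(\<Sum>j\<in>\<Omega>. c j + Vmax - p j) = (\<Sum>j\<in>\<Omega>. c j + Vmax) - price p \<Omega>"
      unfolding price_def by (simp add: sum_subtractf)
    ultimately show ?thesis using "0.prems"(2) st(2) e by simp
  qed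
next
  case (Suc n)
  show ?case
  proof (cases "\<forall>b\<in>B. H b \<in> demand \<Omega> (v b) (pers \<epsilon> H b p)")
    case True then show ?thesis using Suc.prems(1) by blast
  next
    case False
    then obtain b where b: "b \<in> B" "H b \<notin> demand \<Omega> (v b) (pers \<epsilon> H b p)" by blast
    obtain p' H' where st: "Inv c \<epsilon> p' H'" "price p \<Omega> + \<epsilon> \<le> price p' \<Omega>"
      using auction_step[OF c0 e Suc.prems(1) b] by blast
    have "(\<Sum>j\<in>\<Omega>. c j + Vmax - p' j) = (\<Sum>j\<in>\<Omega>. c j + Vmax) - price p' \<Omega>"
      unfolding price_def by (simp add: sum_subtractf)
    moreover have "(\<Sum>j\<in>\<Omega>. c j + Vmax - p j) = (\<Sum>j\<in>\<Omega>. c j + Vmax) - price p \<Omega>"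
      unfolding price_def by (simp add: sum_subtractf)
    ultimately have "(\<Sum>j\<in>\<Omega>. c j + Vmax - p' j) \<le> real n * \<epsilon>"
      using Suc.prems(2) st(2) by (simp add: algebra_simps)
    then show ?thesis using Suc.IH[OF st(1)] by blast
  qed
qed

lemma auction_exists:
  fixes \<epsilon> :: real
  assumes c0: "\<And>j. j \<in> \<Omega> \<Longrightarrow> 0 \<le> c j" and e: "0 < \<epsilon>"
  shows "\<exists>p H. is_alloc B \<Omega> H \<and> (\<forall>j\<in>\<Omega>. c j \<le> p j \<and> p j \<le> c j + Vmax) \<and>
     (\<forall>j\<in>\<Omega> - (\<Union>b\<in>B. H b). p j = c j) \<and>
     (\<forall>b\<in>B. \<forall>X. X \<subseteq> \<Omega> \<longrightarrow> v b X - price p X - \<epsilon> * real (card \<Omega>) \<le> v b (H b) - price p (H b))"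
proof -
  have I0: "Inv c \<epsilon> c (\<lambda>_. {})"
    unfolding Inv_def is_alloc_def using demand_ne[OF finO] Vmax_nonneg by auto
  define n where "n = nat \<lceil>real (card \<Omega>) * Vmax / \<epsilon>\<rceil>"
  have "(\<Sum>j\<in>\<Omega>. c j + Vmax - c j) = real (card \<Omega>) * Vmax" by simp
  also have "\<dots> = (real (card \<Omega>) * Vmax / \<epsilon>) * \<epsilon>" using e by simp
  also have "\<dots> \<le> real n * \<epsilon>" unfolding n_def using e
    by (intro mult_right_mono) (auto intro: order.trans[OF le_of_int_ceiling])
  finally obtain p H where PH: "Inv c \<epsilon> p H" "\<forall>b\<in>B. H b \<in> demand \<Omega> (v b) (pers \<epsilon> H b p)"
    using auction_run[OF c0 e I0] by blast
  have eq: "\<forall>b\<in>B. \<forall>X. X \<subseteq> \<Omega> \<longrightarrow> v b X - price p X - \<epsilon> * real (card \<Omega>) \<le> v b (H b) - price p (H b)"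
  proof (intro ballI allI impI)
    fix b X assume b: "b \<in> B" and X: "X \<subseteq> \<Omega>"
    have d: "\<forall>T. T \<subseteq> \<Omega> \<longrightarrow> v b T - price (pers \<epsilon> H b p) T \<le> v b (H b) - price (pers \<epsilon> H b p) (H b)"
      using PH(2) b by (simp add: demand_def)
    have fX: "finite X" using X finO by (rule finite_subset)
    have "price (pers \<epsilon> H b p) X \<le> (\<Sum>j\<in>X. p j + \<epsilon>)" unfolding price_def pers_def
      by (rule sum_mono) (use e in auto)
    also have "\<dots> = price p X + \<epsilon> * real (card X)" unfolding price_def by (simp add: sum.distrib)
    also have "\<epsilon> * real (card X) \<le> \<epsilon> * real (card \<Omega>)" using card_mono[OF finO X] e by simp
    finally have 1: "price (pers \<epsilon> H b p) X \<le> price p X + \<epsilon> * real (card \<Omega>)" by simp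
    have 2: "price (pers \<epsilon> H b p) (H b) = price p (H b)" by (rule price_cong) (simp add: pers_def)
    show "v b X - price p X - \<epsilon> * real (card \<Omega>) \<le> v b (H b) - price p (H b)" using d X 1 2 by force
  qed
  show ?thesis using PH(1) eq unfolding Inv_def by blast
qed


lemma bw_fin:
  fixes s :: "nat \<Rightarrow> 'c \<Rightarrow> real"
  assumes "finite F"
  shows "(\<And>j k. j \<in> F \<Longrightarrow> lo j \<le> s k j \<and> s k j \<le> hi j) \<Longrightarrow>
    \<exists>r. strict_mono r \<and> (\<forall>j\<in>F. convergent (\<lambda>k. s (r k) j))"
  using assms
proof (induction F rule: finite_induct)
  case empty
  show ?case by (rule exI[of _ id]) (simp add: strict_mono_def)
next
  case (insert j F)
  obtain r where r: "strict_mono r" "\<forall>i\<in>F. convergent (\<lambda>k. s (r k) i)"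
    using insert.IH insert.prems by blast
  obtain f where f: "strict_mono f" "monoseq (\<lambda>n. s (r (f n)) j)"
    using seq_monosub[of "\<lambda>k. s (r k) j"] by blast
  have "range (\<lambda>n. s (r (f n)) j) \<subseteq> {lo j..hi j}" using insert.prems by auto
  then have "Bseq (\<lambda>n. s (r (f n)) j)" by (rule Bseq_eq_bounded)
  then have cj: "convergent (\<lambda>n. s (r (f n)) j)" using f(2) by (rule Bseq_monoseq_convergent)
  have ci: "convergent (\<lambda>k. s (r (f k)) i)" if i: "i \<in> F" for i
  proof -
    obtain l where "(\<lambda>k. s (r k) i) \<longlonglongrightarrow> l" using r(2) i convergentD by blast
    then have "((\<lambda>k. s (r k) i) \<circ> f) \<longlonglongrightarrow> l" using f(1) by (rule LIMSEQ_subseq_LIMSEQ)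
    then show ?thesis unfolding convergent_def comp_def by blast
  qed
  have "strict_mono (r \<circ> f)" using r(1) f(1) by (rule strict_mono_o)
  then show ?case using cj ci by (intro exI[of _ "r \<circ> f"]) (auto simp: comp_def)
qed

lemma walr_exists:
  assumes c0: "\<And>j. j \<in> \<Omega> \<Longrightarrow> 0 \<le> c j"
  shows "\<exists>q X. Walr c q X"
proof -
  define epsn :: "nat \<Rightarrow> real" where "epsn n = inverse (real (Suc n))" for n
  define Pr where "Pr n p H \<longleftrightarrow> is_alloc B \<Omega> H \<and> (\<forall>j\<in>\<Omega>. c j \<le> p j \<and> p j \<le> c j + Vmax) \<and>
     (\<forall>j\<in>\<Omega> - (\<Union>b\<in>B. H b). p j = c j) \<and>
     (\<forall>b\<in>B. \<forall>X. X \<subseteq> \<Omega> \<longrightarrow> v b X - price p X - epsn n * real (card \<Omega>) \<le> v b (H b) - price p (H b))" for n p H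
  have epos: "0 < epsn n" for n unfolding epsn_def by simp
  have ex: "\<exists>p H. Pr n p H" for n unfolding Pr_def
    by (rule auction_exists[OF c0 epos])
  define P where "P n = (SOME p. \<exists>H. Pr n p H)" for n
  define Hn where "Hn n = (SOME H. Pr n (P n) H)" for n
  have PH: "Pr n (P n) (Hn n)" for n
  proof -
    have "\<exists>H. Pr n (P n) H" unfolding P_def using someI_ex[OF ex[of n]] .
    then show ?thesis unfolding Hn_def by (rule someI_ex)
  qed
  define G where "G n = restrict (Hn n) B" for n
  have Gin: "G n \<in> (\<Pi>\<^sub>E b\<in>B. Pow \<Omega>)" for n
    using PH[of n] unfolding G_def Pr_def is_alloc_def by auto
  have "finite (G ` UNIV)"
    by (rule finite_subset[of _ "\<Pi>\<^sub>E b\<in>B. Pow \<Omega>"]) (use Gin finB finO in \<open>auto intro!: finite_PiE\<close>)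
  then obtain n0 where "\<not> finite {n \<in> UNIV. G n = G n0}"
    using pigeonhole_infinite[of "UNIV :: nat set" G] by auto
  then have infN: "infinite {n. G n = G n0}" by simp
  define N where "N = {n. G n = G n0}"
  define H where "H = Hn n0"
  define e where "e k = enumerate N k" for k
  have eN: "e k \<in> N" for k unfolding e_def using enumerate_in_set[OF infN] unfolding N_def .
  have emono: "strict_mono e" unfolding e_def strict_mono_def N_def using enumerate_mono[OF _ infN] by blast
  have HeB: "\<And>k b. b \<in> B \<Longrightarrow> Hn (e k) b = H b"
  proof -
    fix k b assume b: "b \<in> B"
    have "G (e k) = G n0" using eN[of k] by (simp add: N_def)
    then have "restrict (Hn (e k)) B b = restrict (Hn n0) B b" unfolding G_def by simp
    then show "Hn (e k) b = H b" using b unfolding H_def by simp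
  qed
  obtain r where r: "strict_mono r" "\<forall>j\<in>\<Omega>. convergent (\<lambda>k. P (e (r k)) j)"
    using bw_fin[OF finO, where lo=c and hi="\<lambda>j. c j + Vmax" and s="\<lambda>k. P (e k)"] PH unfolding Pr_def by blast
  define m where "m k = e (r k)" for k
  have mmono: "strict_mono m" unfolding m_def using strict_mono_o[OF emono r(1)] by (simp add: comp_def)
  have mk: "k \<le> m k" for k using seq_suble[OF mmono] .
  define q where "q j = (if j \<in> \<Omega> then lim (\<lambda>k. P (m k) j) else c j)" for j
  have lim: "(\<lambda>k. P (m k) j) \<longlonglongrightarrow> q j" if j: "j \<in> \<Omega>" for j
    using r(2) j unfolding q_def m_def by (simp add: convergent_LIMSEQ_iff)
  have Hm: "\<And>k b. b \<in> B \<Longrightarrow> Hn (m k) b = H b" unfolding m_def using HeB by simp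
  have Hal: "is_alloc B \<Omega> H" using PH[of n0] unfolding H_def Pr_def by simp
  have limp: "(\<lambda>k. price (P (m k)) X) \<longlonglongrightarrow> price q X" if X: "X \<subseteq> \<Omega>" for X
    unfolding price_def by (rule tendsto_sum) (use lim X in auto)
  show ?thesis
  proof (intro exI)
    show "Walr c q H" unfolding Walr_def
    proof (intro conjI)
      show "is_alloc B \<Omega> H" by (rule Hal)
      show "\<forall>j\<in>\<Omega>. c j \<le> q j"
      proof
        fix j assume j: "j \<in> \<Omega>"
        show "c j \<le> q j" by (rule LIMSEQ_le_const[OF lim[OF j]]) (use PH j in \<open>auto simp: Pr_def\<close>)
      qed
      show "\<forall>j\<in>\<Omega> - (\<Union>b\<in>B. H b). q j = c j"
      proof
        fix j assume j: "j \<in> \<Omega> - (\<Union>b\<in>B. H b)"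
        have "P (m k) j = c j" for k
        proof -
          have "j \<in> \<Omega> - (\<Union>b\<in>B. Hn (m k) b)" using j Hm by auto
          then show ?thesis using PH[of "m k"] unfolding Pr_def by auto
        qed
        then have "(\<lambda>k. P (m k) j) \<longlonglongrightarrow> c j" by simp
        then show "q j = c j" using lim j LIMSEQ_unique by blast
      qed
      show "\<forall>b\<in>B. H b \<in> demand \<Omega> (v b) q"
      proof
        fix b assume b: "b \<in> B"
        have HbO: "H b \<subseteq> \<Omega>" using Hal b by (simp add: is_alloc_def)
        have "v b T - price q T \<le> v b (H b) - price q (H b)" if T: "T \<subseteq> \<Omega>" for T
        proof -
          define g where "g k = (v b (H b) - price (P (m k)) (H b)) - (v b T - price (P (m k)) T)
              + real (card \<Omega>) * inverse (real (Suc k))" for k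
          have "g \<longlonglongrightarrow> (v b (H b) - price q (H b)) - (v b T - price q T) + real (card \<Omega>) * 0"
            unfolding g_def by (intro tendsto_intros limp T HbO LIMSEQ_inverse_real_of_nat)
          moreover have "0 \<le> g k" for k
          proof -
            have 1: "v b T - price (P (m k)) T - epsn (m k) * real (card \<Omega>) \<le> v b (Hn (m k) b) - price (P (m k)) (Hn (m k) b)"
              using PH[of "m k"] b T unfolding Pr_def by blast
            have "epsn (m k) \<le> inverse (real (Suc k))" unfolding epsn_def using mk[of k]
              by (simp add: le_imp_inverse_le)
            then have "epsn (m k) * real (card \<Omega>) \<le> real (card \<Omega>) * inverse (real (Suc k))"
              by (simp add: mult.commute mult_left_mono)
            then show ?thesis using 1 Hm[OF b] unfolding g_def by simp
          qed
          ultimately have "0 \<le> (v b (H b) - price q (H b)) - (v b T - price q T) + real (card \<Omega>) * 0"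
            by (intro LIMSEQ_le_const) auto
          then show ?thesis by simp
        qed
        then show "H b \<in> demand \<Omega> (v b) q" using HbO by (simp add: demand_def)
      qed
    qed
  qed
qed

end


lemma dem_raise: "X \<in> demand \<Omega> u q \<Longrightarrow> (\<And>j. j \<in> \<Omega> \<Longrightarrow> q j \<le> q' j) \<Longrightarrow> (\<And>j. j \<in> X \<Longrightarrow> q j = q' j) \<Longrightarrow>
   X \<in> demand \<Omega> u q'"
proof -
  assume X: "X \<in> demand \<Omega> u q" and le: "\<And>j. j \<in> \<Omega> \<Longrightarrow> q j \<le> q' j" and eq: "\<And>j. j \<in> X \<Longrightarrow> q j = q' j"
  have XO: "X \<subseteq> \<Omega>" using X by (simp add: demand_def)
  have "u T - price q' T \<le> u X - price q' X" if T: "T \<subseteq> \<Omega>" for T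
  proof -
    have "price q T \<le> price q' T" by (rule price_mono) (use T le in auto)
    moreover have "price q X = price q' X" by (rule price_cong) (rule eq)
    moreover have "u T - price q T \<le> u X - price q X" using X T by (simp add: demand_def)
    ultimately show ?thesis by linarith
  qed
  then show ?thesis using XO by (simp add: demand_def)
qed

locale mkt2 = mkt \<Omega> B v for \<Omega> :: "'a set" and B :: "'b set" and v :: "'b \<Rightarrow> 'a set \<Rightarrow> real" +
  fixes r :: "'a \<Rightarrow> real" and pS :: "'a set \<Rightarrow> 'a \<Rightarrow> real" and AS :: "'a set \<Rightarrow> 'b \<Rightarrow> 'a set"
  assumes r0: "\<And>j. j \<in> \<Omega> \<Longrightarrow> 0 \<le> r j"
    and VA: "virtual_auction \<Omega> v B r pS AS"
begin

definition Hb :: real where "Hb = 1 + Vmax + (\<Sum>j\<in>\<Omega>. r j)"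

lemma Hb_v: "b \<in> B \<Longrightarrow> v b \<Omega> < Hb"
  using Vmax_ge[of b] sum_nonneg[of \<Omega> r] r0 unfolding Hb_def by force

lemma Hb_r: "j \<in> \<Omega> \<Longrightarrow> r j \<le> Hb"
proof -
  assume j: "j \<in> \<Omega>"
  have "r j \<le> (\<Sum>j\<in>\<Omega>. r j)" by (rule member_le_sum[OF j]) (use r0 finO in auto)
  then show ?thesis using Vmax_nonneg unfolding Hb_def by linarith
qed

lemma Hb_pos: "0 \<le> Hb"
  using Vmax_nonneg sum_nonneg[of \<Omega> r] r0 unfolding Hb_def by force

definition cS :: "'a set \<Rightarrow> 'a \<Rightarrow> real" where "cS S j = (if j \<in> S then r j else Hb)"
definition hat :: "'a set \<Rightarrow> ('a \<Rightarrow> real) \<Rightarrow> 'a \<Rightarrow> real" where "hat S p j = (if j \<in> S then p j else Hb)"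

lemma cS0: "j \<in> \<Omega> \<Longrightarrow> 0 \<le> cS S j"
  unfolding cS_def using r0 Hb_pos by auto

lemma T_out: "b \<in> B \<Longrightarrow> (\<And>j. j \<in> \<Omega> - S \<Longrightarrow> Hb \<le> q j) \<Longrightarrow> X \<in> demand \<Omega> (v b) q \<Longrightarrow> X \<subseteq> S \<and> X \<subseteq> \<Omega>"
proof -
  assume b: "b \<in> B" and h: "\<And>j. j \<in> \<Omega> - S \<Longrightarrow> Hb \<le> q j" and X: "X \<in> demand \<Omega> (v b) q"
  have XO: "X \<subseteq> \<Omega>" using X by (simp add: demand_def)
  have "j \<in> S" if j: "j \<in> X" for j
  proof (rule ccontr)
    assume "j \<notin> S"
    then have "Hb \<le> q j" using h j XO by auto
    moreover have "q j \<le> v b \<Omega>" by (rule dem_bound[OF b X j])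
    ultimately show False using Hb_v[OF b] by linarith
  qed
  then show ?thesis using XO by auto
qed

lemma Smax_dem:
  assumes b: "b \<in> B" and SO: "S \<subseteq> \<Omega>" and XS: "X \<subseteq> S"
    and hS: "\<And>j. j \<in> S \<Longrightarrow> q j = p j" and hO: "\<And>j. j \<in> \<Omega> - S \<Longrightarrow> Hb \<le> q j"
    and mx: "\<And>U. U \<subseteq> S \<Longrightarrow> v b U - price p U \<le> v b X - price p X"
  shows "X \<in> demand \<Omega> (v b) q"
proof -
  have "v b T - price q T \<le> v b X - price q X" if T: "T \<subseteq> \<Omega>" for T
  proof -
    have fT: "finite T" using T finO by (rule finite_subset)
    have pX: "price q X = price p X" by (rule price_cong) (use XS hS in auto)
    have split: "price q T = price q (T \<inter> S) + price q (T - S)"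
    proof -
      have "T - T \<inter> S = T - S" by auto
      then show ?thesis using price_diff[OF fT, of "T \<inter> S" q] by simp
    qed
    have pTS: "price q (T \<inter> S) = price p (T \<inter> S)" by (rule price_cong) (use hS in auto)
    have m1: "v b (T \<inter> S) - price p (T \<inter> S) \<le> v b X - price p X" by (rule mx) auto
    show ?thesis
    proof (cases "T - S = {}")
      case True
      then have e1: "T \<inter> S = T" by auto
      have e2: "price q (T - S) = 0" unfolding True by (simp add: price_def)
      show ?thesis using m1 pX pTS split e2 unfolding e1 by linarith
    next
      case False
      then obtain j where j: "j \<in> T - S" by blast
      have "q j \<le> price q (T - S)" unfolding price_def
      proof (rule member_le_sum[OF j])
        show "finite (T - S)" using fT by simp
        fix k assume k: "k \<in> T - S - {j}"
        then have "Hb \<le> q k" using hO T by auto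
        then show "0 \<le> q k" using Hb_pos by linarith
      qed
      then have "Hb \<le> price q (T - S)" using hO[of j] j T by auto
      moreover have "v b T \<le> v b \<Omega>" by (rule v_mono[OF b T order.refl])
      moreover have "0 \<le> v b (T \<inter> S)" by (rule v_nonneg[OF b]) (use T in auto)
      ultimately show ?thesis using m1 pX pTS split Hb_v[OF b] by linarith
    qed
  qed
  then show ?thesis using XS SO by (auto simp: demand_def)
qed

lemma dem_Smax:
  assumes X: "X \<in> demand \<Omega> (v b) q" and XS: "X \<subseteq> S" and SO: "S \<subseteq> \<Omega>" and hS: "\<And>j. j \<in> S \<Longrightarrow> q j = p j"
    and U: "U \<subseteq> S"
  shows "v b U - price p U \<le> v b X - price p X"
proof -
  have "v b U - price q U \<le> v b X - price q X" using X U SO by (auto simp: demand_def)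
  moreover have "price q U = price p U" by (rule price_cong) (use U hS in auto)
  moreover have "price q X = price p X" by (rule price_cong) (use XS hS in auto)
  ultimately show ?thesis by simp
qed

lemma VA_S: "S \<subseteq> \<Omega> \<Longrightarrow> minimal_ef_price \<Omega> v B S r (pS S) \<and> va_alloc v B S (pS S) (AS S)"
  using VA unfolding virtual_auction_def by blast

lemma K:
  assumes SO: "S \<subseteq> \<Omega>" and W0: "Walr (cS S) p0 X0"
  shows "Walr (cS S) (hat S (pS S)) X0 \<and> (\<forall>j\<in>\<Omega>. hat S (pS S) j \<le> p0 j)"
proof -
  define p where "p = pS S"
  define A where "A = AS S"
  have mn: "minimal_ef_price \<Omega> v B S r p" and va: "va_alloc v B S p A" using VA_S[OF SO] unfolding p_def A_def by auto
  have EF: "envy_free v B S p A" using va by (simp add: va_alloc_def)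
  have Aal: "is_alloc B S A" using EF by (simp add: envy_free_def)
  have rp: "\<And>j. j \<in> \<Omega> \<Longrightarrow> r j \<le> p j" using mn by (simp add: minimal_ef_price_def ef_price_def)
  have pout: "\<And>j. j \<in> \<Omega> - S \<Longrightarrow> p j = r j" using mn by (simp add: minimal_ef_price_def)
  have minl: "\<not> (\<exists>q. ef_price \<Omega> v B S r q \<and> (\<forall>j\<in>\<Omega>. q j \<le> p j) \<and> (\<exists>j\<in>\<Omega>. q j < p j))"
    using mn by (simp add: minimal_ef_price_def)
  define c' where "c' j = (if j \<in> S - (\<Union>b\<in>B. A b) then p j else cS S j)" for j
  have W1: "Walr c' (hat S p) A" unfolding Walr_def
  proof (intro conjI)
    show "is_alloc B \<Omega> A" by (rule alloc_mono[OF Aal SO])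
    show "\<forall>b\<in>B. A b \<in> demand \<Omega> (v b) (hat S p)"
    proof
      fix b assume b: "b \<in> B"
      show "A b \<in> demand \<Omega> (v b) (hat S p)"
      proof (rule Smax_dem[OF b SO, where X="A b" and q="hat S p" and p=p])
        show "A b \<subseteq> S" using Aal b by (simp add: is_alloc_def)
        show "\<And>j. j \<in> S \<Longrightarrow> hat S p j = p j" by (simp add: hat_def)
        show "\<And>j. j \<in> \<Omega> - S \<Longrightarrow> Hb \<le> hat S p j" by (simp add: hat_def)
        show "\<And>U. U \<subseteq> S \<Longrightarrow> v b U - price p U \<le> v b (A b) - price p (A b)"
          using EF b by (simp add: envy_free_def)
      qed
    qed
    show "\<forall>j\<in>\<Omega>. c' j \<le> hat S p j" using rp unfolding c'_def cS_def hat_def by auto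
    show "\<forall>j\<in>\<Omega> - (\<Union>b\<in>B. A b). hat S p j = c' j" unfolding c'_def cS_def hat_def by auto
  qed
  have cc: "\<And>j. j \<in> \<Omega> \<Longrightarrow> cS S j \<le> c' j" using rp unfolding c'_def cS_def by auto
  define m where "m k = min (p0 k) (hat S p k)" for k
  have Wm: "Walr (cS S) m X0" unfolding m_def by (rule Walr_meet[OF cS0 cc W0 W1])
  have mc: "\<And>j. j \<in> \<Omega> \<Longrightarrow> cS S j \<le> m j" using Wm by (simp add: Walr_def)
  have X0al: "is_alloc B \<Omega> X0" using Wm by (simp add: Walr_def)
  have X0d: "\<And>b. b \<in> B \<Longrightarrow> X0 b \<in> demand \<Omega> (v b) m" using Wm by (simp add: Walr_def)
  have X0S: "\<And>b. b \<in> B \<Longrightarrow> X0 b \<subseteq> S"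
  proof -
    fix b assume b: "b \<in> B"
    have "\<And>j. j \<in> \<Omega> - S \<Longrightarrow> Hb \<le> m j" using mc unfolding cS_def by force
    then show "X0 b \<subseteq> S" using T_out[OF b _ X0d[OF b]] by blast
  qed
  define m' where "m' j = (if j \<in> S then m j else r j)" for j
  have ef': "ef_price \<Omega> v B S r m'" unfolding ef_price_def
  proof (intro conjI exI)
    show "\<forall>j\<in>\<Omega>. r j \<le> m' j" using mc unfolding m'_def cS_def by force
    show "envy_free v B S m' X0" unfolding envy_free_def
    proof (intro conjI ballI allI impI)
      show "is_alloc B S X0" using X0al X0S unfolding is_alloc_def by auto
      fix b U assume b: "b \<in> B" and U: "U \<subseteq> S"
      show "v b U - price m' U \<le> v b (X0 b) - price m' (X0 b)"
        by (rule dem_Smax[OF X0d[OF b] X0S[OF b] SO _ U]) (simp add: m'_def)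
    qed
  qed
  have le': "\<forall>j\<in>\<Omega>. m' j \<le> p j" unfolding m'_def m_def hat_def using pout by auto
  have eqm': "\<forall>j\<in>\<Omega>. m' j = p j"
  proof (rule ccontr)
    assume "\<not> (\<forall>j\<in>\<Omega>. m' j = p j)"
    then obtain j where "j \<in> \<Omega>" "m' j < p j" using le' by force
    then show False using minl ef' le' by blast
  qed
  have eqm: "\<And>j. j \<in> \<Omega> \<Longrightarrow> m j = hat S p j"
  proof -
    fix j assume j: "j \<in> \<Omega>"
    show "m j = hat S p j"
    proof (cases "j \<in> S")
      case True then show ?thesis using eqm' j unfolding m'_def hat_def by auto
    next
      case False
      have "Hb \<le> p0 j" using W0 j False unfolding Walr_def cS_def by force
      then show ?thesis using False unfolding m_def hat_def by auto
    qed
  qed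
  have "Walr (cS S) (hat S p) X0" using Walr_cong[OF Wm eqm, of "cS S"] by simp
  moreover have "\<forall>j\<in>\<Omega>. hat S p j \<le> p0 j" using eqm unfolding m_def by force
  ultimately show ?thesis unfolding p_def by blast
qed


definition pstar where "pstar = pS \<Omega>"

lemma cS_O: "j \<in> \<Omega> \<Longrightarrow> cS \<Omega> j = r j"
  unfolding cS_def by simp
lemma hat_O: "j \<in> \<Omega> \<Longrightarrow> hat \<Omega> p j = p j"
  unfolding hat_def by simp

lemma Kstar: "Walr r p0 X0 \<Longrightarrow> Walr r pstar X0 \<and> (\<forall>j\<in>\<Omega>. pstar j \<le> p0 j)"
proof -
  assume W: "Walr r p0 X0"
  have "Walr (cS \<Omega>) p0 X0" by (rule Walr_cong[OF W]) (auto simp: cS_O)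
  from K[OF order.refl this] have "Walr (cS \<Omega>) (hat \<Omega> (pS \<Omega>)) X0" "\<forall>j\<in>\<Omega>. hat \<Omega> (pS \<Omega>) j \<le> p0 j" by auto
  then show ?thesis unfolding pstar_def using Walr_cong[of "cS \<Omega>" "hat \<Omega> (pS \<Omega>)" X0 "pS \<Omega>" r] by (auto simp: cS_O hat_O)
qed

lemma pstar_walr: "\<exists>X. Walr r pstar X"
proof -
  have "\<exists>q X. Walr r q X" by (rule walr_exists[where c=r]) (rule r0)
  then obtain q X where "Walr r q X" by blast
  then show ?thesis using Kstar by blast
qed

lemma vor_set: "S \<subseteq> \<Omega> \<Longrightarrow> {(\<Sum>b\<in>B. v b (A b)) | A. is_alloc B S A} =
   (\<lambda>A. \<Sum>b\<in>B. v b (A b)) ` {A \<in> (\<Pi>\<^sub>E b\<in>B. Pow S). is_alloc B S A}"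
proof (rule set_eqI, rule iffI)
  fix x assume "x \<in> {(\<Sum>b\<in>B. v b (A b)) | A. is_alloc B S A}"
  then obtain A where A: "is_alloc B S A" "x = (\<Sum>b\<in>B. v b (A b))" by blast
  have "restrict A B \<in> {A \<in> (\<Pi>\<^sub>E b\<in>B. Pow S). is_alloc B S A}" using A(1) unfolding is_alloc_def by auto
  moreover have "x = (\<Sum>b\<in>B. v b (restrict A B b))" using A(2) by simp
  ultimately show "x \<in> (\<lambda>A. \<Sum>b\<in>B. v b (A b)) ` {A \<in> (\<Pi>\<^sub>E b\<in>B. Pow S). is_alloc B S A}" by blast
qed auto

lemma vor_fin: "S \<subseteq> \<Omega> \<Longrightarrow> finite {(\<Sum>b\<in>B. v b (A b)) | A. is_alloc B S A}"
proof -
  assume SO: "S \<subseteq> \<Omega>"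
  have "finite (\<Pi>\<^sub>E b\<in>B. Pow S)" by (rule finite_PiE[OF finB]) (use SO finO in \<open>auto intro: finite_subset\<close>)
  then show ?thesis unfolding vor_set[OF SO] by auto
qed

lemma alloc_empty: "is_alloc B S (\<lambda>_. {})"
  unfolding is_alloc_def by auto

lemma vor_ge: "S \<subseteq> \<Omega> \<Longrightarrow> is_alloc B S A \<Longrightarrow> (\<Sum>b\<in>B. v b (A b)) \<le> v_OR v B S"
  unfolding v_OR_def by (rule Max_ge[OF vor_fin]) auto

lemma vor_ex: "S \<subseteq> \<Omega> \<Longrightarrow> \<exists>A. is_alloc B S A \<and> (\<Sum>b\<in>B. v b (A b)) = v_OR v B S"
proof -
  assume SO: "S \<subseteq> \<Omega>"
  have ne: "{(\<Sum>b\<in>B. v b (A b)) | A. is_alloc B S A} \<noteq> {}" using alloc_empty by blast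
  have "v_OR v B S \<in> {(\<Sum>b\<in>B. v b (A b)) | A. is_alloc B S A}"
    unfolding v_OR_def by (rule Max_in[OF vor_fin[OF SO] ne])
  then show ?thesis by auto
qed

lemma vor_mono: "S \<subseteq> T \<Longrightarrow> T \<subseteq> \<Omega> \<Longrightarrow> v_OR v B S \<le> v_OR v B T"
proof -
  assume ST: "S \<subseteq> T" and TO: "T \<subseteq> \<Omega>"
  obtain A where A: "is_alloc B S A" "(\<Sum>b\<in>B. v b (A b)) = v_OR v B S" using vor_ex ST TO by (meson order.trans)
  have "is_alloc B T A" by (rule alloc_mono[OF A(1) ST])
  then show ?thesis using vor_ge[OF TO] A(2) by force
qed

lemma welf_r: "is_alloc B T X \<Longrightarrow> T \<subseteq> \<Omega> \<Longrightarrow> welf r X = (\<Sum>b\<in>B. v b (X b)) + price r \<Omega> - price r (\<Union>b\<in>B. X b)"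
proof -
  assume X: "is_alloc B T X" and TO: "T \<subseteq> \<Omega>"
  have "(\<Union>b\<in>B. X b) \<subseteq> \<Omega>" using alloc_sub[OF X] TO by auto
  then show ?thesis unfolding welf_def using price_diff[OF finO, of "\<Union>b\<in>B. X b" r] by simp
qed

lemma price_r_mono: "X \<subseteq> Y \<Longrightarrow> Y \<subseteq> \<Omega> \<Longrightarrow> price r X \<le> price r Y"
proof -
  assume XY: "X \<subseteq> Y" and YO: "Y \<subseteq> \<Omega>"
  have fY: "finite Y" using YO finO by (rule finite_subset)
  have "0 \<le> price r (Y - X)" by (rule price_nonneg) (use r0 YO in auto)
  then show ?thesis using price_diff[OF fY XY, of r] by simp
qed

lemma O1:
  assumes W: "Walr r q X"
  shows "(\<forall>T. T \<subseteq> \<Omega> \<longrightarrow> v_OR v B T - price r T \<le> (\<Sum>b\<in>B. v b (X b)) - price r (\<Union>b\<in>B. X b)) \<and>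
    (\<Sum>b\<in>B. v b (X b)) = v_OR v B (\<Union>b\<in>B. X b)"
proof -
  have Xal: "is_alloc B \<Omega> X" using W by (simp add: Walr_def)
  have rq: "\<And>j. j \<in> \<Omega> \<Longrightarrow> r j \<le> q j" using W by (simp add: Walr_def)
  have UO: "(\<Union>b\<in>B. X b) \<subseteq> \<Omega>" using alloc_sub[OF Xal] .
  have A1: "\<forall>T. T \<subseteq> \<Omega> \<longrightarrow> v_OR v B T - price r T \<le> (\<Sum>b\<in>B. v b (X b)) - price r (\<Union>b\<in>B. X b)"
  proof (intro allI impI)
    fix T assume TO: "T \<subseteq> \<Omega>"
    obtain Y where Y: "is_alloc B T Y" "(\<Sum>b\<in>B. v b (Y b)) = v_OR v B T" using vor_ex[OF TO] by blast
    have YO: "is_alloc B \<Omega> Y" by (rule alloc_mono[OF Y(1) TO])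
    have "welf r Y \<le> L q" by (rule G1[OF YO rq])
    moreover have "L q = welf r X" by (rule G2[OF W])
    moreover have "welf r Y = (\<Sum>b\<in>B. v b (Y b)) + price r \<Omega> - price r (\<Union>b\<in>B. Y b)" by (rule welf_r[OF Y(1) TO])
    moreover have "welf r X = (\<Sum>b\<in>B. v b (X b)) + price r \<Omega> - price r (\<Union>b\<in>B. X b)" by (rule welf_r[OF Xal order.refl])
    moreover have "price r (\<Union>b\<in>B. Y b) \<le> price r T" by (rule price_r_mono[OF alloc_sub[OF Y(1)] TO])
    ultimately show "v_OR v B T - price r T \<le> (\<Sum>b\<in>B. v b (X b)) - price r (\<Union>b\<in>B. X b)" using Y(2) by linarith
  qed
  have "is_alloc B (\<Union>b\<in>B. X b) X" using Xal unfolding is_alloc_def by auto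
  then have "(\<Sum>b\<in>B. v b (X b)) \<le> v_OR v B (\<Union>b\<in>B. X b)" by (rule vor_ge[OF UO])
  moreover have "v_OR v B (\<Union>b\<in>B. X b) - price r (\<Union>b\<in>B. X b) \<le> (\<Sum>b\<in>B. v b (X b)) - price r (\<Union>b\<in>B. X b)"
    using A1 UO by blast
  ultimately have "(\<Sum>b\<in>B. v b (X b)) = v_OR v B (\<Union>b\<in>B. X b)" by linarith
  then show ?thesis using A1 by blast
qed

lemma ORd: "S \<in> OR_demand \<Omega> v B r \<longleftrightarrow> S \<subseteq> \<Omega> \<and> (\<forall>T. T \<subseteq> \<Omega> \<longrightarrow> v_OR v B T - price r T \<le> v_OR v B S - price r S)"
  unfolding OR_demand_def demand_def by simp

lemma r_zero:
  assumes S: "S \<in> OR_demand \<Omega> v B r" and A: "OR_optimal v B S A"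
  shows "price r (S - (\<Union>b\<in>B. A b)) = 0"
proof -
  have SO: "S \<subseteq> \<Omega>" using S ORd by blast
  have Aal: "is_alloc B S A" and Av: "(\<Sum>b\<in>B. v b (A b)) = v_OR v B S" using A by (auto simp: OR_optimal_def)
  have US: "(\<Union>b\<in>B. A b) \<subseteq> S" by (rule alloc_sub[OF Aal])
  have "is_alloc B (\<Union>b\<in>B. A b) A" using Aal unfolding is_alloc_def by auto
  then have "v_OR v B S \<le> v_OR v B (\<Union>b\<in>B. A b)" using vor_ge US SO Av by (metis order.trans)
  moreover have "v_OR v B (\<Union>b\<in>B. A b) - price r (\<Union>b\<in>B. A b) \<le> v_OR v B S - price r S"
    using S US SO unfolding ORd by (meson order.trans)
  moreover have "price r S = price r (\<Union>b\<in>B. A b) + price r (S - (\<Union>b\<in>B. A b))"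
    by (rule price_diff[OF finite_subset[OF SO finO] US])
  moreover have "0 \<le> price r (S - (\<Union>b\<in>B. A b))" by (rule price_nonneg) (use r0 SO in auto)
  ultimately show ?thesis by linarith
qed

lemma O2:
  assumes S: "S \<in> OR_demand \<Omega> v B r" and A: "OR_optimal v B S A" and W: "Walr r q X"
  shows "Walr r q A"
proof -
  have SO: "S \<subseteq> \<Omega>" using S ORd by blast
  have Aal: "is_alloc B S A" and Av: "(\<Sum>b\<in>B. v b (A b)) = v_OR v B S" using A by (auto simp: OR_optimal_def)
  have Xal: "is_alloc B \<Omega> X" using W by (simp add: Walr_def)
  have UO: "(\<Union>b\<in>B. X b) \<subseteq> \<Omega>" using alloc_sub[OF Xal] .
  show ?thesis
  proof (rule G3)
    show "\<And>j. j \<in> \<Omega> \<Longrightarrow> r j \<le> q j" using W by (simp add: Walr_def)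
    show "is_alloc B \<Omega> A" by (rule alloc_mono[OF Aal SO])
    have "L q = welf r X" by (rule G2[OF W])
    also have "\<dots> = (\<Sum>b\<in>B. v b (X b)) + price r \<Omega> - price r (\<Union>b\<in>B. X b)" by (rule welf_r[OF Xal order.refl])
    also have "(\<Sum>b\<in>B. v b (X b)) = v_OR v B (\<Union>b\<in>B. X b)" using O1[OF W] by blast
    also have "v_OR v B (\<Union>b\<in>B. X b) - price r (\<Union>b\<in>B. X b) \<le> v_OR v B S - price r S"
      using S UO unfolding ORd by blast
    then have "v_OR v B (\<Union>b\<in>B. X b) + price r \<Omega> - price r (\<Union>b\<in>B. X b) \<le> v_OR v B S + price r \<Omega> - price r S"
      by linarith
    also have "price r (\<Union>b\<in>B. A b) \<le> price r S" by (rule price_r_mono[OF alloc_sub[OF Aal] SO])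
    then have "v_OR v B S + price r \<Omega> - price r S \<le> welf r A"
      using welf_r[OF Aal SO] Av by linarith
    finally show "L q \<le> welf r A" .
  qed
qed


lemma pS_facts:
  assumes SO: "S \<subseteq> \<Omega>"
  shows "envy_free v B S (pS S) (AS S)" "is_alloc B S (AS S)" "\<And>j. j \<in> \<Omega> \<Longrightarrow> r j \<le> pS S j"
    "\<And>j. j \<in> \<Omega> - S \<Longrightarrow> pS S j = r j"
    "\<not> (\<exists>q. ef_price \<Omega> v B S r q \<and> (\<forall>j\<in>\<Omega>. q j \<le> pS S j) \<and> (\<exists>j\<in>\<Omega>. q j < pS S j))"
    "\<And>A'. envy_free v B S (pS S) A' \<Longrightarrow> (\<Sum>b\<in>B. price (pS S) (A' b)) \<le> (\<Sum>b\<in>B. price (pS S) (AS S b))"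
  using VA_S[OF SO] unfolding minimal_ef_price_def ef_price_def va_alloc_def envy_free_def by auto

lemma pS_nonneg: "S \<subseteq> \<Omega> \<Longrightarrow> j \<in> \<Omega> \<Longrightarrow> 0 \<le> pS S j"
  using pS_facts(3)[of S j] r0[of j] by linarith

lemma LA_walr:
  assumes S: "S \<in> OR_demand \<Omega> v B r" and A: "OR_optimal v B S A"
  shows "Walr r (pS S) A \<and> (\<forall>j\<in>\<Omega>. pS S j = pstar j)"
proof -
  have SO: "S \<subseteq> \<Omega>" using S ORd by blast
  have Aal: "is_alloc B S A" using A by (simp add: OR_optimal_def)
  have US: "(\<Union>b\<in>B. A b) \<subseteq> S" by (rule alloc_sub[OF Aal])
  obtain X where "Walr r pstar X" using pstar_walr by blast
  then have WA: "Walr r pstar A" by (rule O2[OF S A])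
  have pst_out: "\<And>j. j \<in> \<Omega> - S \<Longrightarrow> pstar j = r j" using WA US unfolding Walr_def by blast
  have pst_r: "\<And>j. j \<in> \<Omega> \<Longrightarrow> r j \<le> pstar j" using WA unfolding Walr_def by blast
  have W1: "Walr (cS S) (hat S pstar) A" unfolding Walr_def
  proof (intro conjI ballI)
    show "is_alloc B \<Omega> A" by (rule alloc_mono[OF Aal SO])
    fix b assume b: "b \<in> B"
    have "A b \<in> demand \<Omega> (v b) pstar" using WA b by (simp add: Walr_def)
    then show "A b \<in> demand \<Omega> (v b) (hat S pstar)"
    proof (rule dem_raise)
      show "\<And>j. j \<in> \<Omega> \<Longrightarrow> pstar j \<le> hat S pstar j" using pst_out Hb_r unfolding hat_def by force
      show "\<And>j. j \<in> A b \<Longrightarrow> pstar j = hat S pstar j" using Aal b unfolding hat_def is_alloc_def by auto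
    qed
  next
    fix j assume j: "j \<in> \<Omega>"
    show "cS S j \<le> hat S pstar j" using pst_r[OF j] unfolding cS_def hat_def by auto
  next
    fix j assume j: "j \<in> \<Omega> - (\<Union>b\<in>B. A b)"
    show "hat S pstar j = cS S j" using WA j unfolding hat_def cS_def Walr_def by auto
  qed
  from K[OF SO W1] have K1: "Walr (cS S) (hat S (pS S)) A" and K2: "\<forall>j\<in>\<Omega>. hat S (pS S) j \<le> hat S pstar j" by auto
  have ple: "\<And>j. j \<in> S \<Longrightarrow> pS S j \<le> pstar j" using K2 SO unfolding hat_def by force
  have rc: "\<And>j. j \<in> \<Omega> \<Longrightarrow> r j \<le> cS S j" unfolding cS_def using Hb_r by auto
  have Wm: "Walr r (\<lambda>k. min (pstar k) (hat S (pS S) k)) A" by (rule Walr_meet[OF r0 rc WA K1])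
  have eqp: "\<And>j. j \<in> \<Omega> \<Longrightarrow> min (pstar j) (hat S (pS S) j) = pS S j"
  proof -
    fix j assume j: "j \<in> \<Omega>"
    show "min (pstar j) (hat S (pS S) j) = pS S j"
    proof (cases "j \<in> S")
      case True then show ?thesis using ple[OF True] unfolding hat_def by simp
    next
      case False
      then have "pstar j = r j" "pS S j = r j" using pst_out pS_facts(4)[OF SO] j by auto
      then show ?thesis using False Hb_r[OF j] unfolding hat_def by simp
    qed
  qed
  have Wp: "Walr r (pS S) A" using Walr_cong[OF Wm eqp, of r] by simp
  have "\<forall>j\<in>\<Omega>. pstar j \<le> pS S j" using Kstar[OF Wp] by blast
  moreover have "\<forall>j\<in>\<Omega>. pS S j \<le> pstar j"
  proof
    fix j assume j: "j \<in> \<Omega>"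
    show "pS S j \<le> pstar j"
    proof (cases "j \<in> S")
      case True then show ?thesis by (rule ple)
    next
      case False then show ?thesis using pst_out pS_facts(4)[OF SO] j by auto
    qed
  qed
  ultimately show ?thesis using Wp by force
qed

lemma LA_sumA:
  assumes S: "S \<in> OR_demand \<Omega> v B r" and A: "OR_optimal v B S A"
  shows "(\<Sum>b\<in>B. price (pS S) (A b)) = price (pS S) S"
proof -
  have SO: "S \<subseteq> \<Omega>" using S ORd by blast
  have Aal: "is_alloc B S A" using A by (simp add: OR_optimal_def)
  have US: "(\<Union>b\<in>B. A b) \<subseteq> S" by (rule alloc_sub[OF Aal])
  have WA: "Walr r (pS S) A" using LA_walr[OF S A] by blast
  have "price (pS S) (S - (\<Union>b\<in>B. A b)) = price r (S - (\<Union>b\<in>B. A b))"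
    by (rule price_cong) (use WA SO in \<open>auto simp: Walr_def\<close>)
  also have "\<dots> = 0" by (rule r_zero[OF S A])
  finally have z: "price (pS S) (S - (\<Union>b\<in>B. A b)) = 0" .
  have "price (pS S) S = price (pS S) (\<Union>b\<in>B. A b) + price (pS S) (S - (\<Union>b\<in>B. A b))"
    by (rule price_diff[OF finite_subset[OF SO finO] US])
  then show ?thesis using z alloc_price[OF Aal SO] by simp
qed

lemma LA_dem:
  assumes S: "S \<in> OR_demand \<Omega> v B r" and b: "b \<in> B"
  shows "AS S b \<in> demand \<Omega> (v b) (pS S)"
proof -
  have SO: "S \<subseteq> \<Omega>" using S ORd by blast
  obtain A where A1: "is_alloc B S A" "(\<Sum>b\<in>B. v b (A b)) = v_OR v B S" using vor_ex[OF SO] by blast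
  then have A: "OR_optimal v B S A" by (simp add: OR_optimal_def)
  have WA: "Walr r (pS S) A" using LA_walr[OF S A] by blast
  have Ad: "A b \<in> demand \<Omega> (v b) (pS S)" using WA b by (simp add: Walr_def)
  have AbS: "A b \<subseteq> S" using A1 b by (simp add: is_alloc_def)
  have CS: "AS S b \<subseteq> S" using pS_facts(2)[OF SO] b by (simp add: is_alloc_def)
  have ef: "v b (A b) - price (pS S) (A b) \<le> v b (AS S b) - price (pS S) (AS S b)"
    using pS_facts(1)[OF SO] b AbS by (simp add: envy_free_def)
  have "v b (A b) - price (pS S) (A b) = indir \<Omega> (v b) (pS S)" using Ad demand_iff[OF finO] by blast
  moreover have "v b (AS S b) - price (pS S) (AS S b) \<le> indir \<Omega> (v b) (pS S)"
    by (rule indir_ge[OF finO]) (use CS SO in auto)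
  ultimately show ?thesis using ef CS SO demand_iff[OF finO] by force
qed

lemma LA_sumC:
  assumes S: "S \<in> OR_demand \<Omega> v B r"
  shows "(\<Sum>b\<in>B. price (pS S) (AS S b)) = price (pS S) S"
proof -
  have SO: "S \<subseteq> \<Omega>" using S ORd by blast
  obtain A where A1: "is_alloc B S A" "(\<Sum>b\<in>B. v b (A b)) = v_OR v B S" using vor_ex[OF SO] by blast
  then have A: "OR_optimal v B S A" by (simp add: OR_optimal_def)
  have WA: "Walr r (pS S) A" using LA_walr[OF S A] by blast
  have efA: "envy_free v B S (pS S) A" unfolding envy_free_def
  proof (intro conjI ballI allI impI)
    show "is_alloc B S A" by (rule A1(1))
    fix b U assume b: "b \<in> B" and U: "U \<subseteq> S"
    show "v b U - price (pS S) U \<le> v b (A b) - price (pS S) (A b)"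
      by (rule dem_Smax[OF _ _ SO _ U]) (use WA b A1(1) in \<open>auto simp: Walr_def is_alloc_def\<close>)
  qed
  have ge: "price (pS S) S \<le> (\<Sum>b\<in>B. price (pS S) (AS S b))"
    using pS_facts(6)[OF SO efA] LA_sumA[OF S A] by simp
  have Cal: "is_alloc B S (AS S)" by (rule pS_facts(2)[OF SO])
  have UC: "(\<Union>b\<in>B. AS S b) \<subseteq> S" by (rule alloc_sub[OF Cal])
  have "price (pS S) S = price (pS S) (\<Union>b\<in>B. AS S b) + price (pS S) (S - (\<Union>b\<in>B. AS S b))"
    by (rule price_diff[OF finite_subset[OF SO finO] UC])
  moreover have "0 \<le> price (pS S) (S - (\<Union>b\<in>B. AS S b))" by (rule price_nonneg) (use SO pS_nonneg in auto)
  ultimately have "(\<Sum>b\<in>B. price (pS S) (AS S b)) \<le> price (pS S) S" using alloc_price[OF Cal SO] by simp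
  then show ?thesis using ge by simp
qed

definition Rstar :: real where "Rstar = price pstar \<Omega> - price r \<Omega>"

lemma Rstar_nonneg: "0 \<le> Rstar"
proof -
  obtain X where "Walr r pstar X" using pstar_walr by blast
  then have "price r \<Omega> \<le> price pstar \<Omega>" by (intro price_mono) (auto simp: Walr_def)
  then show ?thesis unfolding Rstar_def by simp
qed

lemma Rstar_split: "T \<subseteq> \<Omega> \<Longrightarrow> Rstar = (price pstar T - price r T) + (price pstar (\<Omega> - T) - price r (\<Omega> - T))"
  unfolding Rstar_def using price_diff[OF finO, of T pstar] price_diff[OF finO, of T r] by simp

lemma pstar_r: "j \<in> \<Omega> \<Longrightarrow> r j \<le> pstar j"
proof -
  assume j: "j \<in> \<Omega>"
  obtain X where "Walr r pstar X" using pstar_walr by blast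
  then show ?thesis using j by (simp add: Walr_def)
qed

lemma LA_rev:
  assumes S: "S \<in> OR_demand \<Omega> v B r"
  shows "mediator_revenue \<Omega> v B r (pS S) (AS S) S = Rstar"
proof -
  have SO: "S \<subseteq> \<Omega>" using S ORd by blast
  obtain A where A1: "is_alloc B S A" "(\<Sum>b\<in>B. v b (A b)) = v_OR v B S" using vor_ex[OF SO] by blast
  then have A: "OR_optimal v B S A" by (simp add: OR_optimal_def)
  have eq: "\<forall>j\<in>\<Omega>. pS S j = pstar j" using LA_walr[OF S A] by blast
  have "price (pS S) S = price pstar S" by (rule price_cong) (use eq SO in auto)
  moreover have "price pstar (\<Omega> - S) = price r (\<Omega> - S)"
    by (rule price_cong) (use eq pS_facts(4)[OF SO] in auto)
  ultimately have "price (pS S) S - price r S = Rstar" using Rstar_split[OF SO] by simp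
  then show ?thesis unfolding mediator_revenue_def using LA_dem[OF S] LA_sumC[OF S] by simp
qed


lemma LB:
  assumes TO: "T \<subseteq> \<Omega>" and fl: "\<forall>b\<in>B. AS T b \<in> demand \<Omega> (v b) (pS T)"
  shows "(\<forall>j\<in>\<Omega>. pS T j = pstar j) \<and> mediator_revenue \<Omega> v B r (pS T) (AS T) T \<le> Rstar \<and>
    (mediator_revenue \<Omega> v B r (pS T) (AS T) T = Rstar \<longrightarrow>
       T \<in> OR_demand \<Omega> v B r \<and> Walr r pstar (AS T) \<and> price r (T - (\<Union>b\<in>B. AS T b)) = 0)"
proof -
  define q where "q = pS T"
  define C where "C = AS T"
  have Cal: "is_alloc B T C" unfolding C_def by (rule pS_facts(2)[OF TO])
  have rq: "\<And>j. j \<in> \<Omega> \<Longrightarrow> r j \<le> q j" unfolding q_def by (rule pS_facts(3)[OF TO])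
  have qout: "\<And>j. j \<in> \<Omega> - T \<Longrightarrow> q j = r j" unfolding q_def by (rule pS_facts(4)[OF TO])
  have flC: "\<And>b. b \<in> B \<Longrightarrow> C b \<in> demand \<Omega> (v b) q" using fl unfolding C_def q_def by blast
  have "\<exists>p0 X0. Walr (cS T) p0 X0" by (rule walr_exists) (rule cS0)
  then obtain p0 X0 where "Walr (cS T) p0 X0" by blast
  then have W: "Walr (cS T) (hat T q) X0" unfolding q_def using K[OF TO] by blast
  have X0al: "is_alloc B \<Omega> X0" using W by (simp add: Walr_def)
  have X0d: "\<And>b. b \<in> B \<Longrightarrow> X0 b \<in> demand \<Omega> (v b) (hat T q)" using W by (simp add: Walr_def)
  have X0T: "\<And>b. b \<in> B \<Longrightarrow> X0 b \<subseteq> T"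
  proof -
    fix b assume b: "b \<in> B"
    have "\<And>j. j \<in> \<Omega> - T \<Longrightarrow> Hb \<le> hat T q j" unfolding hat_def by simp
    then show "X0 b \<subseteq> T" using T_out[OF b _ X0d[OF b]] by blast
  qed
  have WX0: "Walr r q X0" unfolding Walr_def
  proof (intro conjI ballI)
    show "is_alloc B \<Omega> X0" by (rule X0al)
    fix b assume b: "b \<in> B"
    have CT: "C b \<subseteq> T" using Cal b by (simp add: is_alloc_def)
    have "v b (C b) - price q (C b) \<le> v b (X0 b) - price q (X0 b)"
      by (rule dem_Smax[OF X0d[OF b] X0T[OF b] TO _ CT]) (simp add: hat_def)
    moreover have "v b (C b) - price q (C b) = indir \<Omega> (v b) q" using flC[OF b] demand_iff[OF finO] by blast
    moreover have "v b (X0 b) - price q (X0 b) \<le> indir \<Omega> (v b) q"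
      by (rule indir_ge[OF finO]) (use X0T[OF b] TO in auto)
    ultimately show "X0 b \<in> demand \<Omega> (v b) q" using X0T[OF b] TO demand_iff[OF finO] by force
  next
    fix j assume j: "j \<in> \<Omega>"
    show "r j \<le> q j" by (rule rq[OF j])
  next
    fix j assume j: "j \<in> \<Omega> - (\<Union>b\<in>B. X0 b)"
    show "q j = r j"
    proof (cases "j \<in> T")
      case True
      then have "hat T q j = cS T j" using W j by (simp add: Walr_def)
      then show ?thesis using True unfolding hat_def cS_def by simp
    next
      case False then show ?thesis using qout j by auto
    qed
  qed
  from Kstar[OF WX0] have Wst: "Walr r pstar X0" and stle: "\<forall>j\<in>\<Omega>. pstar j \<le> q j" by auto
  have efst: "ef_price \<Omega> v B T r pstar" unfolding ef_price_def
  proof (intro conjI exI)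
    show "\<forall>j\<in>\<Omega>. r j \<le> pstar j" using pstar_r by blast
    show "envy_free v B T pstar X0" unfolding envy_free_def
    proof (intro conjI ballI allI impI)
      show "is_alloc B T X0" using X0al X0T unfolding is_alloc_def by auto
      fix b U assume b: "b \<in> B" and U: "U \<subseteq> T"
      show "v b U - price pstar U \<le> v b (X0 b) - price pstar (X0 b)"
        by (rule dem_Smax[OF _ X0T[OF b] TO _ U]) (use Wst b in \<open>auto simp: Walr_def\<close>)
    qed
  qed
  have eqq: "\<forall>j\<in>\<Omega>. q j = pstar j"
  proof (rule ccontr)
    assume "\<not> (\<forall>j\<in>\<Omega>. q j = pstar j)"
    then obtain j where "j \<in> \<Omega>" "pstar j < q j" using stle by force
    then show False using pS_facts(5)[OF TO] efst stle unfolding q_def by blast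
  qed
  define U where "U = (\<Union>b\<in>B. C b)"
  have UT: "U \<subseteq> T" unfolding U_def by (rule alloc_sub[OF Cal])
  have UO: "U \<subseteq> \<Omega>" using UT TO by auto
  have fT: "finite T" using TO finO by (rule finite_subset)
  have rev: "mediator_revenue \<Omega> v B r q C T = price pstar U - price r T"
  proof -
    have "mediator_revenue \<Omega> v B r q C T = (\<Sum>b\<in>B. price q (C b)) - price r T"
      unfolding mediator_revenue_def using flC by simp
    also have "(\<Sum>b\<in>B. price q (C b)) = price q U" unfolding U_def using alloc_price[OF Cal TO] by simp
    also have "price q U = price pstar U" by (rule price_cong) (use eqq UO in auto)
    finally show ?thesis .
  qed
  have s1: "price pstar T = price pstar U + price pstar (T - U)" by (rule price_diff[OF fT UT])
  have s2: "price r T = price r U + price r (T - U)" by (rule price_diff[OF fT UT])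
  have s3: "price pstar \<Omega> = price pstar U + price pstar (\<Omega> - U)" by (rule price_diff[OF finO UO])
  have s4: "price r \<Omega> = price r U + price r (\<Omega> - U)" by (rule price_diff[OF finO UO])
  have n1: "0 \<le> price r (T - U)" by (rule price_nonneg) (use r0 TO in auto)
  have n2: "price r (\<Omega> - U) \<le> price pstar (\<Omega> - U)" by (rule price_mono) (use pstar_r in auto)
  have n3: "0 \<le> price r (T - U)" by (rule n1)
  have le: "mediator_revenue \<Omega> v B r q C T \<le> Rstar" using rev s2 s3 s4 n1 n2 unfolding Rstar_def by linarith
  have eqcase: "T \<in> OR_demand \<Omega> v B r \<and> Walr r pstar C \<and> price r (T - U) = 0"
    if eqR: "mediator_revenue \<Omega> v B r q C T = Rstar"
  proof -
    have z1: "price r (T - U) = 0" using eqR rev s2 s3 s4 n1 n2 unfolding Rstar_def by linarith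
    have z2: "(\<Sum>j\<in>\<Omega> - U. pstar j - r j) = 0"
    proof -
      have "price pstar (\<Omega> - U) - price r (\<Omega> - U) = 0" using eqR rev s2 s3 s4 n1 n2 unfolding Rstar_def by linarith
      then show ?thesis unfolding price_def by (simp add: sum_subtractf)
    qed
    have z3: "\<forall>j\<in>\<Omega> - U. pstar j - r j = 0"
      using z2 sum_nonneg_eq_0_iff[of "\<Omega> - U" "\<lambda>j. pstar j - r j"] finO pstar_r by auto
    have WC: "Walr r pstar C" unfolding Walr_def
    proof (intro conjI ballI)
      show "is_alloc B \<Omega> C" by (rule alloc_mono[OF Cal TO])
      fix b assume b: "b \<in> B"
      have "demand \<Omega> (v b) q = demand \<Omega> (v b) pstar" by (rule demand_cong) (use eqq in auto)
      then show "C b \<in> demand \<Omega> (v b) pstar" using flC[OF b] by simp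
    next
      fix j assume "j \<in> \<Omega>" then show "r j \<le> pstar j" by (rule pstar_r)
    next
      fix j assume "j \<in> \<Omega> - (\<Union>b\<in>B. C b)" then show "pstar j = r j" using z3 unfolding U_def by auto
    qed
    have o1: "\<forall>T'. T' \<subseteq> \<Omega> \<longrightarrow> v_OR v B T' - price r T' \<le> (\<Sum>b\<in>B. v b (C b)) - price r U"
      and o2: "(\<Sum>b\<in>B. v b (C b)) = v_OR v B U" using O1[OF WC] unfolding U_def by auto
    have "v_OR v B U \<le> v_OR v B T" by (rule vor_mono[OF UT TO])
    then have "\<forall>T'. T' \<subseteq> \<Omega> \<longrightarrow> v_OR v B T' - price r T' \<le> v_OR v B T - price r T"
      using o1 o2 s2 z1 by force
    then have "T \<in> OR_demand \<Omega> v B r" using TO ORd by blast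
    then show ?thesis using WC z1 by blast
  qed
  show ?thesis using eqq le eqcase unfolding q_def C_def U_def by blast
qed


lemma rev_le: "T \<subseteq> \<Omega> \<Longrightarrow> mediator_revenue \<Omega> v B r (pS T) (AS T) T \<le> Rstar"
proof -
  assume TO: "T \<subseteq> \<Omega>"
  show ?thesis
  proof (cases "\<forall>b\<in>B. AS T b \<in> demand \<Omega> (v b) (pS T)")
    case True then show ?thesis using LB[OF TO] by blast
  next
    case False
    then have "mediator_revenue \<Omega> v B r (pS T) (AS T) T = -1" unfolding mediator_revenue_def by meson
    then show ?thesis using Rstar_nonneg by simp
  qed
qed

lemma rev_eq_iff: "T \<subseteq> \<Omega> \<Longrightarrow> mediator_revenue \<Omega> v B r (pS T) (AS T) T = Rstar \<longleftrightarrow> T \<in> OR_demand \<Omega> v B r"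
proof
  assume TO: "T \<subseteq> \<Omega>" and eq: "mediator_revenue \<Omega> v B r (pS T) (AS T) T = Rstar"
  show "T \<in> OR_demand \<Omega> v B r"
  proof (cases "\<forall>b\<in>B. AS T b \<in> demand \<Omega> (v b) (pS T)")
    case True then show ?thesis using LB[OF TO] eq by blast
  next
    case False
    then have "mediator_revenue \<Omega> v B r (pS T) (AS T) T = -1" unfolding mediator_revenue_def by meson
    then show ?thesis using eq Rstar_nonneg by simp
  qed
next
  assume "T \<in> OR_demand \<Omega> v B r"
  then show "mediator_revenue \<Omega> v B r (pS T) (AS T) T = Rstar" by (rule LA_rev)
qed

lemma main:
  shows "mediator_demand \<Omega> v B r pS AS = OR_demand \<Omega> v B r \<and>
    (\<forall>S\<in>mediator_demand \<Omega> v B r pS AS.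
       OR_optimal v B S (AS S) \<and>
       (\<forall>A. OR_optimal v B S A \<longrightarrow>
          va_alloc v B S (pS S) A \<and>
          mediator_revenue \<Omega> v B r (pS S) A S = mediator_revenue \<Omega> v B r (pS S) (AS S) S))"
proof -
  obtain S0 where S0: "S0 \<in> OR_demand \<Omega> v B r" using demand_ne[OF finO] unfolding OR_demand_def by blast
  have S0O: "S0 \<subseteq> \<Omega>" using S0 ORd by blast
  have E: "mediator_demand \<Omega> v B r pS AS = OR_demand \<Omega> v B r"
  proof (rule set_eqI, rule iffI)
    fix S assume S: "S \<in> mediator_demand \<Omega> v B r pS AS"
    have SO: "S \<subseteq> \<Omega>" using S by (simp add: mediator_demand_def)
    have "mediator_revenue \<Omega> v B r (pS S0) (AS S0) S0 \<le> mediator_revenue \<Omega> v B r (pS S) (AS S) S"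
      using S S0O by (simp add: mediator_demand_def)
    then have "Rstar \<le> mediator_revenue \<Omega> v B r (pS S) (AS S) S" using LA_rev[OF S0] by simp
    then have "mediator_revenue \<Omega> v B r (pS S) (AS S) S = Rstar" using rev_le[OF SO] by simp
    then show "S \<in> OR_demand \<Omega> v B r" using rev_eq_iff[OF SO] by blast
  next
    fix S assume S: "S \<in> OR_demand \<Omega> v B r"
    have SO: "S \<subseteq> \<Omega>" using S ORd by blast
    have "\<forall>T. T \<subseteq> \<Omega> \<longrightarrow> mediator_revenue \<Omega> v B r (pS T) (AS T) T \<le> mediator_revenue \<Omega> v B r (pS S) (AS S) S"
      using rev_le LA_rev[OF S] by simp
    then show "S \<in> mediator_demand \<Omega> v B r pS AS" using SO by (simp add: mediator_demand_def)
  qed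
  have P2: "OR_optimal v B S (AS S) \<and>
       (\<forall>A. OR_optimal v B S A \<longrightarrow>
          va_alloc v B S (pS S) A \<and>
          mediator_revenue \<Omega> v B r (pS S) A S = mediator_revenue \<Omega> v B r (pS S) (AS S) S)"
    if S: "S \<in> OR_demand \<Omega> v B r" for S
  proof -
    have SO: "S \<subseteq> \<Omega>" using S ORd by blast
    define C where "C = AS S"
    define p where "p = pS S"
    have Cal: "is_alloc B S C" unfolding C_def by (rule pS_facts(2)[OF SO])
    have flC: "\<forall>b\<in>B. C b \<in> demand \<Omega> (v b) p" unfolding C_def p_def using LA_dem[OF S] by blast
    have revC: "mediator_revenue \<Omega> v B r p C S = Rstar" unfolding C_def p_def by (rule LA_rev[OF S])
    from LB[OF SO] flC revC have WC: "Walr r pstar C" and rz: "price r (S - (\<Union>b\<in>B. C b)) = 0"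
      unfolding C_def p_def by blast+
    have UC: "(\<Union>b\<in>B. C b) \<subseteq> S" by (rule alloc_sub[OF Cal])
    have o1: "v_OR v B S - price r S \<le> (\<Sum>b\<in>B. v b (C b)) - price r (\<Union>b\<in>B. C b)"
      and o2: "(\<Sum>b\<in>B. v b (C b)) = v_OR v B (\<Union>b\<in>B. C b)" using O1[OF WC] SO by auto
    have "v_OR v B (\<Union>b\<in>B. C b) \<le> v_OR v B S" by (rule vor_mono[OF UC SO])
    moreover have "price r S = price r (\<Union>b\<in>B. C b) + price r (S - (\<Union>b\<in>B. C b))"
      by (rule price_diff[OF finite_subset[OF SO finO] UC])
    ultimately have "(\<Sum>b\<in>B. v b (C b)) = v_OR v B S" using o1 o2 rz by linarith
    then have optC: "OR_optimal v B S C" using Cal by (simp add: OR_optimal_def)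
    have sumC: "(\<Sum>b\<in>B. price p (C b)) = price p S" unfolding p_def C_def by (rule LA_sumC[OF S])
    have rest: "va_alloc v B S p A \<and> mediator_revenue \<Omega> v B r p A S = mediator_revenue \<Omega> v B r p C S"
      if A: "OR_optimal v B S A" for A
    proof -
      have Aal: "is_alloc B S A" using A by (simp add: OR_optimal_def)
      have WA: "Walr r p A" unfolding p_def using LA_walr[OF S A] by blast
      have sumA: "(\<Sum>b\<in>B. price p (A b)) = price p S" unfolding p_def by (rule LA_sumA[OF S A])
      have efA: "envy_free v B S p A" unfolding envy_free_def
      proof (intro conjI ballI allI impI)
        show "is_alloc B S A" by (rule Aal)
        fix b U assume b: "b \<in> B" and U: "U \<subseteq> S"
        show "v b U - price p U \<le> v b (A b) - price p (A b)"
          by (rule dem_Smax[OF _ _ SO _ U]) (use WA b Aal in \<open>auto simp: Walr_def is_alloc_def\<close>)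
      qed
      have mx: "(\<Sum>b\<in>B. price p (A' b)) \<le> (\<Sum>b\<in>B. price p (A b))" if A': "envy_free v B S p A'" for A'
      proof -
        have A'al: "is_alloc B S A'" using A' by (simp add: envy_free_def)
        have UA': "(\<Union>b\<in>B. A' b) \<subseteq> S" by (rule alloc_sub[OF A'al])
        have "price p S = price p (\<Union>b\<in>B. A' b) + price p (S - (\<Union>b\<in>B. A' b))"
          by (rule price_diff[OF finite_subset[OF SO finO] UA'])
        moreover have "0 \<le> price p (S - (\<Union>b\<in>B. A' b))" by (rule price_nonneg) (use SO pS_nonneg in \<open>auto simp: p_def\<close>)
        ultimately show ?thesis using alloc_price[OF A'al SO] sumA by simp
      qed
      have va: "va_alloc v B S p A" unfolding va_alloc_def using efA mx by blast
      have flA: "\<forall>b\<in>B. A b \<in> demand \<Omega> (v b) p" using WA by (simp add: Walr_def)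
      have "mediator_revenue \<Omega> v B r p A S = mediator_revenue \<Omega> v B r p C S"
        unfolding mediator_revenue_def using flA flC sumA sumC by simp
      then show ?thesis using va by blast
    qed
    show ?thesis using optC rest unfolding C_def p_def by blast
  qed
  show ?thesis unfolding E using P2 by blast
qed

end


theorem theorem3:
  fixes \<Omega> :: "'a set" and B :: "'b set" and v :: "'b \<Rightarrow> 'a set \<Rightarrow> real"
    and r :: "'a \<Rightarrow> real"
    and pS :: "'a set \<Rightarrow> 'a \<Rightarrow> real" and AS :: "'a set \<Rightarrow> 'b \<Rightarrow> 'a set"
  assumes "finite \<Omega>" and "finite B"
    and "\<forall>b\<in>B. monotone_valuation \<Omega> (v b)"
    and "\<forall>b\<in>B. gross_substitute \<Omega> (v b)"
    and "\<forall>j\<in>\<Omega>. 0 \<le> r j"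
    and "virtual_auction \<Omega> v B r pS AS"
  shows "mediator_demand \<Omega> v B r pS AS = OR_demand \<Omega> v B r \<and>
    (\<forall>S\<in>mediator_demand \<Omega> v B r pS AS.
       OR_optimal v B S (AS S) \<and>
       (\<forall>A. OR_optimal v B S A \<longrightarrow>
          va_alloc v B S (pS S) A \<and>
          mediator_revenue \<Omega> v B r (pS S) A S = mediator_revenue \<Omega> v B r (pS S) (AS S) S))"
proof -
  interpret M: mkt2 \<Omega> B v r pS AS
    by unfold_locales (use assms in auto)
  show ?thesis by (rule M.main)
qed

end
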